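(* Let $q=3^\alpha$ where $\alpha\geq 3$ is odd. Then there exists a finite group $H$ such that $O_3(H)\neq 1$ and $\mu(H)=\{6,9,q-1,(q+1)/2\}$.
   Context: For a finite group $X$, $\omega(X)$ is the set of orders of elements of $X$, and $\mu(X)$ is the set of elements of $\omega(X)$ maximal with respect to divisibility. $O_3(X)$ is the largest normal $3$-subgroup of $X$. *)

theory Defs
  imports "HOL-Algebra.Algebra"
begin

definition elem_orders :: "('a, 'b) monoid_scheme \<Rightarrow> nat set" where
  "elem_orders G = group.ord G ` carrier G"

definition max_orders :: "('a, 'b) monoid_scheme \<Rightarrow> nat set" where
  "max_orders G = {n \<in> elem_orders G. \<forall>m \<in> elem_orders G. n dvd m \<longrightarrow> m = n}"

definition normal_p_subgroup :: "nat \<Rightarrow> 'a set \<Rightarrow> ('a, 'b) monoid_scheme \<Rightarrow> bool" where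
  "normal_p_subgroup p N G \<longleftrightarrow> N \<lhd> G \<and> (\<exists>k. card N = p ^ k)"

text \<open>O_p(G): the largest normal p-subgroup, i.e. the subgroup generated by all
  normal p-subgroups (for finite G this is itself a normal p-subgroup).\<close>
definition O_p :: "nat \<Rightarrow> ('a, 'b) monoid_scheme \<Rightarrow> 'a set" where
  "O_p p G = generate G (\<Union> {N. normal_p_subgroup p N G})"

end

theory Submission
  imports Defs "HOL-Algebra.Algebraic_Closure_Type"
begin

datatype gf3 = Z0 | Z1 | Z2

lemma gf3_cases_all: "(\<And>x::gf3. P x) \<equiv> Trueprop (P Z0 \<and> P Z1 \<and> P Z2)"
proof
  assume "\<And>x. P x" then show "P Z0 \<and> P Z1 \<and> P Z2" by auto
next
  fix x assume "P Z0 \<and> P Z1 \<and> P Z2" then show "P x" by (cases x) auto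
qed

instantiation gf3 :: field
begin
fun plus_gf3 where
  "plus_gf3 Z0 y = y" | "plus_gf3 x Z0 = x" | "plus_gf3 Z1 Z1 = Z2" | "plus_gf3 Z1 Z2 = Z0"
| "plus_gf3 Z2 Z1 = Z0" | "plus_gf3 Z2 Z2 = Z1"
fun uminus_gf3 where "uminus_gf3 Z0 = Z0" | "uminus_gf3 Z1 = Z2" | "uminus_gf3 Z2 = Z1"
definition minus_gf3 :: "gf3 \<Rightarrow> gf3 \<Rightarrow> gf3" where "minus_gf3 x y = x + (- y)"
fun times_gf3 where
  "times_gf3 Z0 y = Z0" | "times_gf3 x Z0 = Z0" | "times_gf3 Z1 y = y" | "times_gf3 x Z1 = x"
| "times_gf3 Z2 Z2 = Z1"
definition zero_gf3 where "zero_gf3 = Z0"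
definition one_gf3 where "one_gf3 = Z1"
definition inverse_gf3 :: "gf3 \<Rightarrow> gf3" where "inverse_gf3 x = x"
definition divide_gf3 :: "gf3 \<Rightarrow> gf3 \<Rightarrow> gf3" where "divide_gf3 x y = x * y"
instance
  apply intro_classes
  apply (unfold gf3_cases_all)
  apply (simp_all add: zero_gf3_def one_gf3_def inverse_gf3_def divide_gf3_def minus_gf3_def)
  apply (case_tac a; simp)
  done
end

type_synonym om = "gf3 alg_closure"

lemma three_om: "(3::om) = 0"
proof -
  have "(3::gf3) = 1 + 1 + 1" by simp
  hence "(3::gf3) = 0" by (simp add: zero_gf3_def one_gf3_def)
  hence "to_ac (3::gf3) = to_ac 0" by simp
  thus ?thesis by simp
qed

lemma two_om: "(2::om) \<noteq> 0"
proof -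
  have "(2::gf3) = 1 + 1" by simp
  hence "(2::gf3) \<noteq> 0" by (simp add: zero_gf3_def one_gf3_def)
  moreover have "to_ac (2::gf3) = (2::om)" by (rule to_ac_numeral)
  ultimately show ?thesis by (metis to_ac_eq_0_iff)
qed

lemma card_roots_rsqf:
  fixes p :: "'a::alg_closed_field poly"
  assumes "rsquarefree p"
  shows "card {x. poly p x = 0} = degree p"
  using assms
proof (induction "degree p" arbitrary: p rule: less_induct)
  case (less p)
  have p0: "p \<noteq> 0" using less.prems by (simp add: rsquarefree_def)
  show ?case
  proof (cases "degree p = 0")
    case True
    then obtain c where "p = [:c:]" by (metis degree_eq_zeroE)
    with p0 have "{x. poly p x = 0} = {}" by auto
    with True show ?thesis by simp
  next
    case False
    then obtain x where x: "poly p x = 0" using alg_closed_imp_poly_has_root by blast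
    hence "[:-x, 1:] dvd p" using poly_eq_0_iff_dvd by blast
    then obtain r where pr: "p = [:-x, 1:] * r" by (elim dvdE)
    have r0: "r \<noteq> 0" using p0 pr by auto
    have ordp: "order a p = order a [:-x,1:] + order a r" for a
      using order_mult[of "[:-x,1:]" r a] p0 pr by simp
    have rsq: "rsquarefree r"
      unfolding rsquarefree_def
    proof (intro conjI allI r0)
      fix a
      have "order a p = 0 \<or> order a p = 1" using less.prems by (simp add: rsquarefree_def)
      thus "order a r = 0 \<or> order a r = 1" using ordp[of a] by auto
    qed
    have "order x [:-x,1:] = 1" using order_power_n_n[of x 1] by simp
    moreover have "order x p = 0 \<or> order x p = 1" using less.prems by (simp add: rsquarefree_def)
    ultimately have "order x r = 0" using ordp[of x] by auto
    hence rx: "poly r x \<noteq> 0" using order_root r0 by blast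
    have "degree p = degree [:-x,1:] + degree r" unfolding pr by (rule degree_mult_eq) (use r0 in auto)
    hence degp: "degree p = Suc (degree r)" by simp
    have "{y. poly p y = 0} = insert x {y. poly r y = 0}" using pr by auto
    moreover have "finite {y. poly r y = 0}" using r0 poly_roots_finite by blast
    ultimately have "card {y. poly p y = 0} = Suc (card {y. poly r y = 0})" using rx by simp
    also have "card {y. poly r y = 0} = degree r" using less.hyps[of r] degp rsq by simp
    finally show ?thesis using degp by simp
  qed
qed

lemma order_le1_pderiv:
  fixes p :: "'a::field poly"
  assumes "p \<noteq> 0" "poly (pderiv p) a \<noteq> 0"
  shows "order a p \<le> 1"
proof (rule ccontr)
  assume "\<not> order a p \<le> 1"
  hence "[:-a,1:] ^ 2 dvd [:-a,1:] ^ order a p" by (intro le_imp_power_dvd) auto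
  also have "\<dots> dvd p" by (rule order_1)
  finally have "[:-a,1:] ^ Suc 1 dvd p" by (simp add: numeral_2_eq_2)
  then obtain r where pr: "p = [:-a,1:] ^ Suc 1 * r" by (elim dvdE)
  have "pderiv p = smult (of_nat (Suc 1)) ([:-a,1:] ^ 1) * pderiv [:-a,1:] * r + [:-a,1:] ^ Suc 1 * pderiv r"
    unfolding pr pderiv_mult pderiv_power_Suc by simp
  hence "poly (pderiv p) a = 0" by simp
  with assms show False by simp
qed

lemma frob3: "((x::om) + y) ^ 3 = x ^ 3 + y ^ 3"
proof -
  have "(x + y) ^ 3 = x ^ 3 + y ^ 3 + 3 * (x^2 * y + x * y^2)"
    by (simp add: algebra_simps power2_eq_square power3_eq_cube)
  thus ?thesis by (simp add: three_om)
qed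

lemma frobN: "((x::om) + y) ^ (3 ^ j) = x ^ (3 ^ j) + y ^ (3 ^ j)"
proof (induction j)
  case 0 then show ?case by simp
next
  case (Suc j)
  have "(x + y) ^ (3 ^ Suc j) = ((x + y) ^ (3 ^ j)) ^ 3" by (simp add: power_mult[symmetric] mult.commute)
  also have "\<dots> = (x ^ (3 ^ j)) ^ 3 + (y ^ (3 ^ j)) ^ 3" by (simp add: Suc frob3)
  also have "\<dots> = x ^ (3 ^ Suc j) + y ^ (3 ^ Suc j)" by (simp add: power_mult[symmetric] mult.commute)
  finally show ?case .
qed

lemma odd3: "odd ((3::nat) ^ j)" by simp

lemma frob_neg: "(-(x::om)) ^ (3 ^ j) = - (x ^ (3 ^ j))"
  using odd3[of j] by (simp add: power_minus_odd)

lemma frob_diff: "((x::om) - y) ^ (3 ^ j) = x ^ (3 ^ j) - y ^ (3 ^ j)"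
  using frobN[of x "-y" j] frob_neg[of y j] by simp

lemma of_nat_pow3: "j > 0 \<Longrightarrow> (of_nat (3 ^ j) :: om) = 0"
  by (simp add: three_om)

lemma card_fix:
  assumes "j > 0"
  shows "card {x::om. x ^ (3 ^ j) = x} = 3 ^ j"
proof -
  define N :: nat where "N = 3 ^ j"
  have N3: "N \<ge> 3" using assms unfolding N_def
    by (metis One_nat_def Suc_leI power_increasing_iff power_one_right zero_less_numeral
        one_less_numeral_iff semiring_norm(77))
  define p :: "om poly" where "p = monom 1 N - [:0,1:]"
  have polyp: "poly p x = x ^ N - x" for x by (simp add: p_def poly_monom)
  have degp: "degree p = N"
  proof -
    have "degree [:0,1::om:] < degree (monom (1::om) N)" using N3 by (simp add: degree_monom_eq)
    hence "degree (monom (1::om) N + - [:0,1:]) = N" by (subst degree_add_eq_left) (auto simp: degree_monom_eq)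
    thus ?thesis unfolding p_def by (metis diff_conv_add_uminus)
  qed
  have p0: "p \<noteq> 0" using degp N3 by auto
  have dp: "pderiv p = monom (of_nat N) (N - 1) - [:1:]"
    unfolding p_def by (simp add: pderiv_diff pderiv_monom pderiv_pCons)
  have "(of_nat N :: om) = 0" unfolding N_def using of_nat_pow3[OF assms] .
  hence dp': "pderiv p = - [:1:]" using dp by simp
  have "rsquarefree p" unfolding rsquarefree_def
  proof (intro conjI allI p0)
    fix a have "order a p \<le> 1" by (rule order_le1_pderiv) (use p0 dp' in auto)
    thus "order a p = 0 \<or> order a p = 1" by auto
  qed
  hence "card {x. poly p x = 0} = N" using card_roots_rsqf degp by metis
  moreover have "{x. poly p x = 0} = {x. x ^ N = x}" using polyp by auto
  ultimately show ?thesis unfolding N_def by simp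
qed

abbreviation R0 :: "om ring" where "R0 \<equiv> ring_of_type_algebra"

lemma R0_simps [simp]: "carrier R0 = UNIV" "x \<otimes>\<^bsub>R0\<^esub> y = x * y" "x \<oplus>\<^bsub>R0\<^esub> y = x + y"
  "\<one>\<^bsub>R0\<^esub> = 1" "\<zero>\<^bsub>R0\<^esub> = 0"
  by (simp_all add: ring_of_type_algebra_def)

lemma R0_field: "field R0" by (rule field_from_type_algebra)

lemma R0_neg: "\<ominus>\<^bsub>R0\<^esub> x = - x"
proof -
  interpret field R0 by (rule R0_field)
  show ?thesis by (rule minus_equality) auto
qed

lemma R0_inv: "x \<noteq> 0 \<Longrightarrow> inv\<^bsub>R0\<^esub> x = inverse x"
proof -
  interpret field R0 by (rule R0_field)
  assume "x \<noteq> 0" thus ?thesis by (intro comm_inv_char) auto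
qed

definition fixN :: "nat \<Rightarrow> om set" where "fixN N = {x. x ^ N = x}"

lemma fixN_subfield:
  assumes "j > 0"
  shows "subfield (fixN (3^j)) R0"
proof -
  interpret field R0 by (rule R0_field)
  show ?thesis
  proof (rule subfieldI')
    show "subring (fixN (3^j)) R0"
    proof (rule subringI)
      show "\<one>\<^bsub>R0\<^esub> \<in> fixN (3^j)" by (simp add: fixN_def)
    next
      fix h assume "h \<in> fixN (3^j)" thus "\<ominus>\<^bsub>R0\<^esub> h \<in> fixN (3^j)"
        by (simp add: fixN_def R0_neg frob_neg)
    next
      fix h1 h2 assume "h1 \<in> fixN (3^j)" "h2 \<in> fixN (3^j)"
      thus "h1 \<otimes>\<^bsub>R0\<^esub> h2 \<in> fixN (3^j)" "h1 \<oplus>\<^bsub>R0\<^esub> h2 \<in> fixN (3^j)"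
        by (simp_all add: fixN_def frobN power_mult_distrib)
    qed auto
  next
    fix k assume "k \<in> fixN (3^j) - {\<zero>\<^bsub>R0\<^esub>}"
    thus "inv\<^bsub>R0\<^esub> k \<in> fixN (3^j)" by (simp add: fixN_def R0_inv power_inverse)
  qed
qed

lemma card_fixN: "j > 0 \<Longrightarrow> card (fixN (3^j)) = 3^j"
  unfolding fixN_def by (rule card_fix)

lemma finite_fixN: "j > 0 \<Longrightarrow> finite (fixN (3^j))"
  using card_fixN[of j] by (metis card.infinite power_eq_0_iff zero_neq_numeral)

lemma pow_R0K: "x [^]\<^bsub>R0\<lparr>carrier := K\<rparr>\<^esub> (n::nat) = x ^ n"
  by (induction n) (simp_all add: ring_of_type_algebra_def)

lemma exists_gen:
  assumes "j > 0"
  shows "\<exists>w::om. w \<in> fixN (3^j) \<and> w \<noteq> 0 \<and> (\<forall>n. w ^ n = 1 \<longleftrightarrow> (3^j - 1) dvd n)"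
proof -
  define K where "K = fixN (3^j)"
  define RK where "RK = R0\<lparr>carrier := K\<rparr>"
  interpret R0f: field R0 by (rule R0_field)
  interpret field RK unfolding RK_def K_def by (rule R0f.subfield_iff(2)[OF fixN_subfield[OF assms]])
  have finK: "finite K" using finite_fixN[OF assms] K_def by simp
  have "finite (carrier RK)" using finK by (simp add: RK_def)
  from finite_field_mult_group_has_gen[OF this] obtain w where
    w: "w \<in> carrier (Multiplicative_Group.mult_of RK)" and gen: "carrier (Multiplicative_Group.mult_of RK) = {w [^]\<^bsub>RK\<^esub> i | i::nat. i \<in> UNIV}"
    by (elim bexE) (rule that)
  have zRK: "\<zero>\<^bsub>RK\<^esub> = 0" by (simp add: RK_def)
  have cm: "carrier (Multiplicative_Group.mult_of RK) = K - {0}" by (simp add: RK_def)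
  have wK: "w \<in> K" "w \<noteq> 0" using w unfolding cm by auto
  have pw: "w [^]\<^bsub>RK\<^esub> i = w ^ i" for i :: nat
    unfolding RK_def by (rule pow_R0K)
  have gen': "K - {0} = range (\<lambda>i. w ^ i)"
    using gen unfolding cm pw by blast
  define M where "M = 3^j - (1::nat)"
  have "(3::nat)^1 \<le> 3^j" using assms by (intro power_increasing) auto
  hence p3: "(3::nat)^j \<ge> 3" by simp
  have M1: "M + 1 = 3^j" using p3 unfolding M_def by simp
  have cardK: "card K = M + 1" using card_fixN[OF assms] M1 unfolding K_def by simp
  have cardK0: "card (K - {0}) = M"
  proof -
    have "0 \<in> K" by (simp add: K_def fixN_def)
    thus ?thesis using cardK finK by (simp add: card_Diff_singleton)
  qed
  have wM: "w ^ M = 1"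
  proof -
    have "w ^ (M + 1) = w" using wK(1) M1 unfolding K_def fixN_def by simp
    thus ?thesis using wK(2) by (simp add: power_add) 
  qed
  have M0: "M > 0" using M1 p3 by simp
  have "w ^ n = 1 \<longleftrightarrow> M dvd n" for n
  proof
    assume wn: "w ^ n = 1"
    define r where "r = n mod M"
    have "n = M * (n div M) + r" unfolding r_def by simp
    hence "w ^ n = (w ^ M) ^ (n div M) * w ^ r" by (metis power_add power_mult)
    hence wr: "w ^ r = 1" using wn wM by simp
    show "M dvd n"
    proof (rule ccontr)
      assume "\<not> M dvd n"
      hence r0: "r > 0" "r < M" using M0 unfolding r_def by (auto simp: dvd_eq_mod_eq_0)
      have "range (\<lambda>i. w ^ i) \<subseteq> (\<lambda>i. w ^ i) ` {..<r}"
      proof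
        fix x assume "x \<in> range (\<lambda>i. w ^ i)"
        then obtain i where xi: "x = w ^ i" by auto
        have "i = r * (i div r) + i mod r" by simp
        hence "w ^ i = (w ^ r) ^ (i div r) * w ^ (i mod r)" by (metis power_add power_mult)
        hence "x = w ^ (i mod r)" using wr xi by simp
        thus "x \<in> (\<lambda>i. w ^ i) ` {..<r}" using r0 by auto
      qed
      hence "card (range (\<lambda>i. w ^ i)) \<le> card ((\<lambda>i. w ^ i) ` {..<r})"
        by (intro card_mono) auto
      also have "\<dots> \<le> card {..<r}" by (rule card_image_le) simp
      finally have "card (range (\<lambda>i. w ^ i)) \<le> r" by simp
      thus False using cardK0 gen' r0 by simp
    qed
  next
    assume "M dvd n" then obtain c where "n = M * c" by auto
    thus "w ^ n = 1" using wM by (simp add: power_mult)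
  qed
  thus ?thesis using wK unfolding K_def M_def by blast
qed

datatype m2 = M om om om om

fun e11 where "e11 (M a b c d) = a"
fun e12 where "e12 (M a b c d) = b"
fun e21 where "e21 (M a b c d) = c"
fun e22 where "e22 (M a b c d) = d"

lemma m2_eq_iff: "P = Q \<longleftrightarrow> e11 P = e11 Q \<and> e12 P = e12 Q \<and> e21 P = e21 Q \<and> e22 P = e22 Q"
  by (cases P; cases Q) auto

lemma m2_expand: "P = M (e11 P) (e12 P) (e21 P) (e22 P)" by (cases P) auto

instantiation m2 :: ring_1
begin
definition "zero_m2 = M 0 0 0 0"
definition "one_m2 = M 1 0 0 1"
definition "plus_m2 P Q = M (e11 P + e11 Q) (e12 P + e12 Q) (e21 P + e21 Q) (e22 P + e22 Q)"
definition "minus_m2 P Q = M (e11 P - e11 Q) (e12 P - e12 Q) (e21 P - e21 Q) (e22 P - e22 Q)"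
definition "uminus_m2 P = M (- e11 P) (- e12 P) (- e21 P) (- e22 P)"
definition "times_m2 P Q = M (e11 P * e11 Q + e12 P * e21 Q) (e11 P * e12 Q + e12 P * e22 Q)
                             (e21 P * e11 Q + e22 P * e21 Q) (e21 P * e12 Q + e22 P * e22 Q)"
instance
  by intro_classes
    (simp_all add: m2_eq_iff zero_m2_def one_m2_def plus_m2_def minus_m2_def uminus_m2_def times_m2_def
       algebra_simps)
end

lemma m2_simps [simp]:
  "e11 (P + Q) = e11 P + e11 Q" "e12 (P + Q) = e12 P + e12 Q" "e21 (P + Q) = e21 P + e21 Q" "e22 (P + Q) = e22 P + e22 Q"
  "e11 (P - Q) = e11 P - e11 Q" "e12 (P - Q) = e12 P - e12 Q" "e21 (P - Q) = e21 P - e21 Q" "e22 (P - Q) = e22 P - e22 Q"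
  "e11 (- P) = - e11 P" "e12 (- P) = - e12 P" "e21 (- P) = - e21 P" "e22 (- P) = - e22 P"
  "e11 (P * Q) = e11 P * e11 Q + e12 P * e21 Q" "e12 (P * Q) = e11 P * e12 Q + e12 P * e22 Q"
  "e21 (P * Q) = e21 P * e11 Q + e22 P * e21 Q" "e22 (P * Q) = e21 P * e12 Q + e22 P * e22 Q"
  "e11 0 = 0" "e12 0 = 0" "e21 0 = 0" "e22 0 = 0"
  "e11 1 = 1" "e12 1 = 0" "e21 1 = 0" "e22 1 = 1"
  by (simp_all add: zero_m2_def one_m2_def plus_m2_def minus_m2_def uminus_m2_def times_m2_def)

definition msc :: "om \<Rightarrow> m2 \<Rightarrow> m2" where "msc s P = M (s * e11 P) (s * e12 P) (s * e21 P) (s * e22 P)"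
definition tr :: "m2 \<Rightarrow> om" where "tr P = e11 P + e22 P"
definition det :: "m2 \<Rightarrow> om" where "det P = e11 P * e22 P - e12 P * e21 P"
definition mT :: "m2 \<Rightarrow> m2" where "mT P = M (e11 P) (e21 P) (e12 P) (e22 P)"
definition fr :: "m2 \<Rightarrow> m2" where "fr P = M (e11 P ^ 3) (e12 P ^ 3) (e21 P ^ 3) (e22 P ^ 3)"
definition adj :: "m2 \<Rightarrow> m2" where "adj P = M (e22 P) (- e12 P) (- e21 P) (e11 P)"

lemma msc_simps [simp]:
  "e11 (msc s P) = s * e11 P" "e12 (msc s P) = s * e12 P" "e21 (msc s P) = s * e21 P" "e22 (msc s P) = s * e22 P"
  "e11 (mT P) = e11 P" "e12 (mT P) = e21 P" "e21 (mT P) = e12 P" "e22 (mT P) = e22 P"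
  "e11 (fr P) = e11 P ^ 3" "e12 (fr P) = e12 P ^ 3" "e21 (fr P) = e21 P ^ 3" "e22 (fr P) = e22 P ^ 3"
  "e11 (adj P) = e22 P" "e12 (adj P) = - e12 P" "e21 (adj P) = - e21 P" "e22 (adj P) = e11 P"
  "e11 (M a b c d) = a" "e12 (M a b c d) = b" "e21 (M a b c d) = c" "e22 (M a b c d) = d"
  by (simp_all add: msc_def mT_def fr_def adj_def)

lemma msc_mult_left: "msc s P * Q = msc s (P * Q)" by (simp add: m2_eq_iff algebra_simps)
lemma msc_mult_right: "P * msc s Q = msc s (P * Q)" by (simp add: m2_eq_iff algebra_simps)
lemma msc_msc: "msc s (msc r P) = msc (s * r) P" by (simp add: m2_eq_iff algebra_simps)
lemma msc_add: "msc s (P + Q) = msc s P + msc s Q" by (simp add: m2_eq_iff algebra_simps)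
lemma msc_diff: "msc s (P - Q) = msc s P - msc s Q" by (simp add: m2_eq_iff algebra_simps)
lemma msc_add2: "msc (s + r) P = msc s P + msc r P" by (simp add: m2_eq_iff algebra_simps)
lemma msc_1 [simp]: "msc 1 P = P" by (simp add: m2_eq_iff)
lemma msc_0 [simp]: "msc 0 P = 0" "msc s 0 = 0" by (simp_all add: m2_eq_iff)
lemma msc_neg1: "msc (-1) P = - P" by (simp add: m2_eq_iff)
lemma mT_mult: "mT (P * Q) = mT Q * mT P" by (simp add: m2_eq_iff algebra_simps)
lemma fr_mult: "fr (P * Q) = fr P * fr Q" by (simp add: m2_eq_iff frob3 power_mult_distrib)
lemma mT_msc: "mT (msc s P) = msc s (mT P)" by (simp add: m2_eq_iff)
lemma fr_1 [simp]: "fr 1 = 1" "mT 1 = 1" by (simp_all add: m2_eq_iff)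
lemma mT_add: "mT (P + Q) = mT P + mT Q" by (simp add: m2_eq_iff)
lemma det_mult: "det (P * Q) = det P * det Q" by (simp add: det_def algebra_simps)
lemma tr_add: "tr (P + Q) = tr P + tr Q" by (simp add: tr_def)
lemma tr_msc: "tr (msc s P) = s * tr P" by (simp add: tr_def algebra_simps)
lemma tr_1: "tr 1 = 2" by (simp add: tr_def)
lemma det_fr: "det (fr P) = det P ^ 3"
  by (simp add: det_def frob_diff[of _ _ 1, simplified] power_mult_distrib)
lemma tr_fr: "tr (fr P) = tr P ^ 3" by (simp add: tr_def frob3)
lemma det_mT: "det (mT P) = det P" by (simp add: det_def algebra_simps)
lemma tr_mT: "tr (mT P) = tr P" by (simp add: tr_def)
lemma adj_mult: "P * adj P = msc (det P) 1" "adj P * P = msc (det P) 1"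
  by (simp_all add: m2_eq_iff det_def algebra_simps)
lemma tr_adj: "tr (adj P) = tr P" by (simp add: tr_def)
lemma det_adj: "det (adj P) = det P" by (simp add: det_def algebra_simps)
lemma det_msc: "det (msc s P) = s^2 * det P" by (simp add: det_def algebra_simps power2_eq_square)

lemma cayley_hamilton: "P * P = msc (tr P) P - msc (det P) 1"
  by (simp add: m2_eq_iff tr_def det_def algebra_simps)

lemma three_m2: "Q + Q + Q = (0::m2)"
proof -
  have "\<And>x::om. x + x + x = 3 * x" by simp
  thus ?thesis by (simp add: m2_eq_iff three_om)
qed

definition phi :: "om \<Rightarrow> m2 \<Rightarrow> m2 \<Rightarrow> m2" where
  "phi e A P = msc e (A * P * mT (fr A))"

lemma phi_comp: "phi e A (phi e' B P) = phi (e * e') (A * B) P"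
  unfolding phi_def
  by (simp add: fr_mult mT_mult msc_mult_left msc_mult_right msc_msc mult.assoc mult.commute)

lemma phi_comp': "phi e A \<circ> phi e' B = phi (e * e') (A * B)"
  by (rule ext) (simp add: phi_comp)

lemma phi_add: "phi e A (P + Q) = phi e A P + phi e A Q"
  unfolding phi_def by (simp add: algebra_simps msc_add)

lemma phi_zero [simp]: "phi e A 0 = 0" unfolding phi_def by simp

lemma phi_neg: "phi e A (- P) = - phi e A P"
  unfolding phi_def by (simp add: m2_eq_iff algebra_simps)

lemma phi_diff: "phi e A (P - Q) = phi e A P - phi e A Q"
  using phi_add[of e A P "-Q"] phi_neg[of e A Q] by simp

lemma phi_one: "phi 1 1 = id" unfolding phi_def by (rule ext) simp

lemma phi_pow: "(phi e A) ^^ n = phi (e ^ n) (A ^ n)"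
proof (induction n)
  case 0 thus ?case by (simp add: phi_one)
next
  case (Suc n) thus ?case by (simp add: phi_comp')
qed

lemma fr_neg: "fr (- A) = - fr A" by (simp add: m2_eq_iff power3_eq_cube)
lemma mT_neg: "mT (- A) = - mT A" by (simp add: m2_eq_iff)

lemma phi_negA: "phi e (- A) = phi e A"
  unfolding phi_def by (rule ext) (simp add: fr_neg mT_neg)

lemma adj_mult1: "det P = 1 \<Longrightarrow> P * adj P = 1" "det P = 1 \<Longrightarrow> adj P * P = 1"
  by (simp_all add: adj_mult)

lemma msc_zero_iff: "msc s P = 0 \<Longrightarrow> P \<noteq> 0 \<Longrightarrow> s = 0"
  by (auto simp: m2_eq_iff)

lemma fixed_point_trace:
  assumes dA: "det A = 1" and e: "e * e = 1" and fx: "phi e A P = P" and P0: "P \<noteq> 0"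
  shows "tr A = e * tr A ^ 3"
proof -
  define B where "B = mT (fr A)"
  have dB: "det B = 1" unfolding B_def by (simp add: det_mT det_fr dA)
  have trB: "tr B = tr A ^ 3" unfolding B_def by (simp add: tr_mT tr_fr)
  have APB: "A * P * B = msc e P"
  proof -
    have "msc e (phi e A P) = msc e P" using fx by simp
    thus ?thesis unfolding phi_def B_def by (simp add: msc_msc e)
  qed
  define C where "C = msc e (adj B)"
  have dC: "det C = 1" unfolding C_def by (simp add: det_msc det_adj dB power2_eq_square e)
  have trC: "tr C = e * tr A ^ 3" unfolding C_def by (simp add: tr_msc tr_adj trB)
  have AP: "A * P = P * C"
  proof -
    have "A * P = A * P * (B * adj B)" using adj_mult1(1)[OF dB] by simp
    also have "\<dots> = (A * P * B) * adj B" by (simp add: mult.assoc)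
    also have "\<dots> = P * C" unfolding APB C_def by (simp add: msc_mult_left msc_mult_right)
    finally show ?thesis .
  qed
  have "(A * A) * P = P * (C * C)"
    by (metis AP mult.assoc)
  hence "(msc (tr A) A - 1) * P = P * (msc (tr C) C - 1)"
    using cayley_hamilton[of A] cayley_hamilton[of C] dA dC by simp
  hence "msc (tr A) (A * P) = msc (tr C) (P * C)"
    by (simp add: algebra_simps msc_mult_left msc_mult_right)
  hence "msc (tr A - tr C) (P * C) = 0"
    unfolding AP by (simp add: msc_diff[symmetric] msc_add2[symmetric] algebra_simps m2_eq_iff)
  hence "msc (tr A - tr C) (P * C * adj C) = 0"
    by (metis msc_mult_left mult_zero_left)
  hence "msc (tr A - tr C) P = 0" using adj_mult1(1)[OF dC] by (simp add: mult.assoc)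
  hence "tr A - tr C = 0" using P0 by (rule msc_zero_iff)
  thus ?thesis using trC by simp
qed

lemma pow4_zero: "(x::om) * x ^ 3 = 0 \<Longrightarrow> x = 0"
  by (metis mult_eq_0_iff power_eq_0_iff)

lemma phi_id:
  assumes pid: "phi e B = id" and dB: "det B = 1" and e: "e * e = 1"
  shows "e = 1 \<and> (B = 1 \<or> B = -1)"
proof -
  obtain a b c d where B: "B = M a b c d" by (cases B)
  have h1: "phi e B (M 1 0 0 0) = M 1 0 0 0" and h2: "phi e B (M 0 0 0 1) = M 0 0 0 1"
    and h3: "phi e B (M 0 1 0 0) = M 0 1 0 0" using pid by auto
  have e0: "e \<noteq> 0" using e by auto
  have "phi e B (M 1 0 0 0) = M (e * (a * a ^ 3)) (e * (a * c ^ 3)) (e * (c * a ^ 3)) (e * (c * c ^ 3))"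
    unfolding phi_def B by (simp add: m2_eq_iff)
  hence "e * (c * c ^ 3) = 0" and ea: "e * (a * a ^ 3) = 1" using h1 by simp_all
  hence "c * c ^ 3 = 0" using e0 by simp
  hence c0: "c = 0" by (rule pow4_zero)
  have "phi e B (M 0 0 0 1) = M (e * (b * b ^ 3)) (e * (b * d ^ 3)) (e * (d * b ^ 3)) (e * (d * d ^ 3))"
    unfolding phi_def B by (simp add: m2_eq_iff)
  hence "e * (b * b ^ 3) = 0" and ed: "e * (d * d ^ 3) = 1" using h2 by simp_all
  hence "b * b ^ 3 = 0" using e0 by simp
  hence b0: "b = 0" by (rule pow4_zero)
  have "phi e B (M 0 1 0 0) = M 0 (e * (a * d ^ 3)) 0 0"
    unfolding phi_def B by (simp add: m2_eq_iff b0 c0)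
  hence ead: "e * (a * d ^ 3) = 1" using h3 by simp
  have ad: "a * d = 1" using dB unfolding B det_def by (simp add: b0 c0)
  have ed2: "e * (d * d) = 1"
  proof -
    have "e * (a * d ^ 3) = e * (d * d) * (a * d)" by (simp add: power3_eq_cube algebra_simps)
    thus ?thesis using ead ad by simp
  qed
  have dd: "d * d = 1"
  proof -
    have "e * (d * d ^ 3) = (e * (d * d)) * (d * d)" by (simp add: power3_eq_cube algebra_simps)
    thus ?thesis using ed ed2 by simp
  qed
  have e1: "e = 1" using ed2 dd by simp
  have "(d - 1) * (d + 1) = 0" using dd by (simp add: algebra_simps)
  hence "d - 1 = 0 \<or> d + 1 = 0" by simp
  hence "d = 1 \<or> d = -1" by (metis eq_iff_diff_eq_0 add_eq_0_iff2)
  moreover have "a = d"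
  proof -
    have "a = a * (d * d)" using dd by simp
    also have "\<dots> = (a * d) * d" by (simp add: mult.assoc)
    finally show ?thesis using ad by simp
  qed
  ultimately have "B = 1 \<or> B = -1" unfolding B using b0 c0 by (auto simp: m2_eq_iff)
  thus ?thesis using e1 by simp
qed

lemma eigen_decomp:
  fixes A :: m2 and l :: om
  assumes dA: "det A = 1" and lr: "l * l - tr A * l + 1 = 0" and l1: "l * l \<noteq> 1"
  defines "mu \<equiv> inverse l"
  defines "E1 \<equiv> msc (inverse (l - mu)) (A - msc mu 1)"
  defines "E2 \<equiv> msc (inverse (l - mu)) (msc l 1 - A)"
  shows "A ^ n = msc (l ^ n) E1 + msc (mu ^ n) E2" and "E1 + E2 = 1"
    and "tr E1 = 1" and "tr E2 = 1" and "tr A = l + mu"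
proof -
  have l0: "l \<noteq> 0" using lr by auto
  have lmu: "l * mu = 1" unfolding mu_def using l0 by simp
  have t: "tr A = l + mu"
  proof -
    have "tr A * l = l * l + 1" using lr by (simp add: algebra_simps)
    have "tr A = tr A * (l * mu)" using lmu by simp
    also have "\<dots> = (tr A * l) * mu" by (simp add: mult.assoc)
    also have "\<dots> = (l * l + 1) * mu" using \<open>tr A * l = l * l + 1\<close> by simp
    also have "\<dots> = l * (l * mu) + mu" by (simp add: algebra_simps)
    also have "\<dots> = l + mu" using lmu by simp
    finally show ?thesis .
  qed
  show "tr A = l + mu" by (rule t)
  have dmu: "l - mu \<noteq> 0"
  proof
    assume "l - mu = 0" hence "l * l = l * mu" by simp
    thus False using lmu l1 by simp
  qed
  define c where "c = inverse (l - mu)"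
  have c: "c * (l - mu) = 1" unfolding c_def using dmu by simp
  have AA: "A * A = msc (l + mu) A - 1" using cayley_hamilton[of A] dA t by simp
  have AE1': "A * (A - msc mu 1) = msc l (A - msc mu 1)"
  proof -
    have "A * (A - msc mu 1) = A * A - msc mu A" by (simp add: right_diff_distrib msc_mult_right)
    also have "\<dots> = msc (l + mu) A - 1 - msc mu A" by (simp add: AA)
    also have "\<dots> = msc l A - msc (l * mu) 1" using lmu by (simp add: msc_add2)
    also have "\<dots> = msc l (A - msc mu 1)" by (simp add: msc_diff msc_msc)
    finally show ?thesis .
  qed
  have AE2': "A * (msc l 1 - A) = msc mu (msc l 1 - A)"
  proof -
    have "A * (msc l 1 - A) = msc l A - A * A" by (simp add: right_diff_distrib msc_mult_right)
    also have "\<dots> = msc l A - (msc (l + mu) A - 1)" by (simp add: AA)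
    also have "\<dots> = msc (mu * l) 1 - msc mu A" using lmu by (simp add: msc_add2 mult.commute)
    also have "\<dots> = msc mu (msc l 1 - A)" by (simp add: msc_diff msc_msc)
    finally show ?thesis .
  qed
  have AE1: "A * E1 = msc l E1"
    unfolding E1_def by (simp add: msc_mult_right msc_msc mult.commute AE1')
  have AE2: "A * E2 = msc mu E2"
    unfolding E2_def by (simp add: msc_mult_right msc_msc mult.commute AE2')
  have "E1 + E2 = msc c (A - msc mu 1 + (msc l 1 - A))"
    unfolding E1_def E2_def c_def by (simp add: m2_eq_iff algebra_simps)
  also have "\<dots> = msc c (msc (l - mu) 1)" by (simp add: m2_eq_iff)
  also have "\<dots> = 1" using c by (simp add: msc_msc)
  finally show E12: "E1 + E2 = 1" .
  have "tr E1 = c * (tr A - 2 * mu)" unfolding E1_def c_def by (simp add: tr_def algebra_simps)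
  also have "\<dots> = c * (l - mu)" using t by simp
  finally show "tr E1 = 1" using c by simp
  have "tr E2 = c * (2 * l - tr A)" unfolding E2_def c_def by (simp add: tr_def algebra_simps)
  also have "\<dots> = c * (l - mu)" using t by simp
  finally show "tr E2 = 1" using c by simp
  show "A ^ n = msc (l ^ n) E1 + msc (mu ^ n) E2"
  proof (induction n)
    case 0 thus ?case using E12 by simp
  next
    case (Suc n)
    have "A ^ Suc n = A * (msc (l ^ n) E1 + msc (mu ^ n) E2)" using Suc by simp
    also have "\<dots> = msc (l ^ n) (A * E1) + msc (mu ^ n) (A * E2)"
      by (simp add: distrib_left msc_mult_right)
    also have "\<dots> = msc (l ^ Suc n) E1 + msc (mu ^ Suc n) E2"
      by (simp add: AE1 AE2 msc_msc mult.commute)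
    finally show ?case .
  qed
qed

lemma max_orders_char:
  assumes all: "\<forall>s \<in> elem_orders G. \<exists>d \<in> T. s dvd d"
    and sub: "T \<subseteq> elem_orders G"
    and pw: "\<forall>d \<in> T. \<forall>d' \<in> T. d dvd d' \<longrightarrow> d = d'"
  shows "max_orders G = T"
proof
  show "max_orders G \<subseteq> T"
  proof
    fix n assume "n \<in> max_orders G"
    hence n: "n \<in> elem_orders G" "\<forall>m \<in> elem_orders G. n dvd m \<longrightarrow> m = n"
      unfolding max_orders_def by auto
    then obtain d where d: "d \<in> T" "n dvd d" using all by blast
    hence "d = n" using n sub by blast
    thus "n \<in> T" using d by simp
  qed
next
  show "T \<subseteq> max_orders G"
  proof
    fix d assume d: "d \<in> T"
    have "\<forall>m \<in> elem_orders G. d dvd m \<longrightarrow> m = d"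
    proof (intro ballI impI)
      fix m assume m: "m \<in> elem_orders G" "d dvd m"
      then obtain d' where d': "d' \<in> T" "m dvd d'" using all by blast
      have "d dvd d'" using m(2) d'(2) by (rule dvd_trans)
      hence "d = d'" using pw d d'(1) by blast
      thus "m = d" using m(2) d'(2) by (simp add: dvd_antisym)
    qed
    thus "d \<in> max_orders G" unfolding max_orders_def using d sub by blast
  qed
qed

lemma transport:
  fixes G :: "'a monoid" and N :: "'a set"
  assumes grp: "group G" and fin: "finite (carrier G)" and nrm: "N \<lhd> G"
    and cardN: "card N = p ^ k" and nt: "N \<noteq> {\<one>\<^bsub>G\<^esub>}"
  shows "\<exists>H :: nat monoid. group H \<and> finite (carrier H) \<and>
           O_p p H \<noteq> {\<one>\<^bsub>H\<^esub>} \<and> max_orders H = max_orders G"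
proof -
  interpret G: group G by (rule grp)
  obtain h :: "'a \<Rightarrow> nat" and n where hn: "h ` carrier G = {i. i < n}" "inj_on h (carrier G)"
    using finite_imp_inj_to_nat_seg[OF fin] by blast
  define g where "g = inv_into (carrier G) h"
  have gh: "x \<in> carrier G \<Longrightarrow> g (h x) = x" for x unfolding g_def using hn(2) by simp
  have hg: "y \<in> h ` carrier G \<Longrightarrow> h (g y) = y" for y unfolding g_def by (simp add: f_inv_into_f)
  have gc: "y \<in> h ` carrier G \<Longrightarrow> g y \<in> carrier G" for y unfolding g_def by (simp add: inv_into_into)
  define H :: "nat monoid" where "H = \<lparr>carrier = h ` carrier G, monoid.mult = (\<lambda>x y. h (g x \<otimes>\<^bsub>G\<^esub> g y)), one = h \<one>\<^bsub>G\<^esub>\<rparr>"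
  have Hs: "carrier H = h ` carrier G" "x \<otimes>\<^bsub>H\<^esub> y = h (g x \<otimes>\<^bsub>G\<^esub> g y)" "\<one>\<^bsub>H\<^esub> = h \<one>\<^bsub>G\<^esub>" for x y
    by (simp_all add: H_def)
  have hmult: "x \<in> carrier G \<Longrightarrow> y \<in> carrier G \<Longrightarrow> h (x \<otimes>\<^bsub>G\<^esub> y) = h x \<otimes>\<^bsub>H\<^esub> h y" for x y
    by (simp add: Hs gh)
  have grpH: "group H"
  proof (rule groupI)
    fix x y assume "x \<in> carrier H" "y \<in> carrier H"
    thus "x \<otimes>\<^bsub>H\<^esub> y \<in> carrier H" by (simp add: Hs gc)
  next
    show "\<one>\<^bsub>H\<^esub> \<in> carrier H" by (simp add: Hs)
  next
    fix x y z assume "x \<in> carrier H" "y \<in> carrier H" "z \<in> carrier H"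
    thus "x \<otimes>\<^bsub>H\<^esub> y \<otimes>\<^bsub>H\<^esub> z = x \<otimes>\<^bsub>H\<^esub> (y \<otimes>\<^bsub>H\<^esub> z)"
      by (simp add: Hs gc gh G.m_assoc)
  next
    fix x assume "x \<in> carrier H" thus "\<one>\<^bsub>H\<^esub> \<otimes>\<^bsub>H\<^esub> x = x" by (simp add: Hs gc gh hg)
  next
    fix x assume x: "x \<in> carrier H"
    have "h (inv\<^bsub>G\<^esub> (g x)) \<in> carrier H" using x by (simp add: Hs gc)
    moreover have "h (inv\<^bsub>G\<^esub> (g x)) \<otimes>\<^bsub>H\<^esub> x = \<one>\<^bsub>H\<^esub>" using x by (simp add: Hs gc gh)
    ultimately show "\<exists>y\<in>carrier H. y \<otimes>\<^bsub>H\<^esub> x = \<one>\<^bsub>H\<^esub>" by blast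
  qed
  interpret H: group H by (rule grpH)
  have finH: "finite (carrier H)" using fin by (simp add: Hs)
  have hpow: "x \<in> carrier G \<Longrightarrow> h x [^]\<^bsub>H\<^esub> m = h (x [^]\<^bsub>G\<^esub> m)" for x and m :: nat
  proof (induction m)
    case 0 thus ?case by (simp add: Hs)
  next
    case (Suc m) thus ?case by (simp add: hmult)
  qed
  have hord: "x \<in> carrier G \<Longrightarrow> H.ord (h x) = G.ord x" for x
  proof -
    assume x: "x \<in> carrier G"
    have "h x \<in> carrier H" using x by (simp add: Hs)
    moreover have "h x [^]\<^bsub>H\<^esub> m = \<one>\<^bsub>H\<^esub> \<longleftrightarrow> G.ord x dvd m" for m
    proof -
      have "h x [^]\<^bsub>H\<^esub> m = \<one>\<^bsub>H\<^esub> \<longleftrightarrow> h (x [^]\<^bsub>G\<^esub> m) = h \<one>\<^bsub>G\<^esub>" using x by (simp add: hpow Hs)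
      also have "\<dots> \<longleftrightarrow> x [^]\<^bsub>G\<^esub> m = \<one>\<^bsub>G\<^esub>" using x hn(2) by (auto dest: inj_onD)
      also have "\<dots> \<longleftrightarrow> G.ord x dvd m" using x by (rule G.pow_eq_id)
      finally show ?thesis .
    qed
    ultimately show ?thesis using H.ord_unique by blast
  qed
  have eo: "elem_orders H = elem_orders G"
  proof -
    have "elem_orders H = H.ord ` h ` carrier G" unfolding elem_orders_def by (simp add: Hs)
    also have "\<dots> = G.ord ` carrier G" using hord by (auto simp: image_iff)
    finally show ?thesis unfolding elem_orders_def .
  qed
  have mo: "max_orders H = max_orders G" unfolding max_orders_def eo ..
  have iso: "h \<in> iso G H"
    unfolding iso_def hom_def bij_betw_def using hn(2) by (auto simp: Hs hmult)
  have nN': "h ` N \<lhd> H" by (rule iso_normal_subgroup[OF iso grp grpH nrm])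
  have NG: "N \<subseteq> carrier G" using subgroup.subset[OF normal_imp_subgroup[OF nrm]] .
  have "card (h ` N) = card N" using NG hn(2) by (simp add: card_image inj_on_subset)
  hence "normal_p_subgroup p (h ` N) H" unfolding normal_p_subgroup_def using nN' cardN by auto
  hence sub: "h ` N \<subseteq> O_p p H" unfolding O_p_def by (auto intro: generate.incl)
  have "\<one>\<^bsub>G\<^esub> \<in> N" using subgroup.one_closed[OF normal_imp_subgroup[OF nrm]] .
  then obtain y where y: "y \<in> N" "y \<noteq> \<one>\<^bsub>G\<^esub>" using nt by blast
  have "h y \<noteq> h \<one>\<^bsub>G\<^esub>" using y NG hn(2) by (meson G.one_closed inj_onD subsetD)
  hence "h y \<noteq> \<one>\<^bsub>H\<^esub>" by (simp add: Hs)
  moreover have "h y \<in> O_p p H" using sub y by blast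
  ultimately have "O_p p H \<noteq> {\<one>\<^bsub>H\<^esub>}" by blast
  thus ?thesis using grpH finH mo by blast
qed

locale ctx =
  fixes al :: nat
  assumes odd_al: "odd al" and al3: "al \<ge> 3"
begin

abbreviation "q \<equiv> (3::nat) ^ al"
abbreviation "FF \<equiv> fixN q"

lemma al0: "al > 0" using al3 by simp

lemma q_ge: "q \<ge> 27"
proof -
  have "(3::nat) ^ 3 \<le> 3 ^ al" using al3 by (intro power_increasing) auto
  thus ?thesis by simp
qed

lemma q_mod4: "q mod 4 = 3"
proof -
  obtain u where u: "al = 2 * u + 1" using odd_al oddE by blast
  have "(3::nat) ^ al = 3 * 9 ^ u" unfolding u by (simp add: power_mult power_add)
  moreover have "(9::nat) ^ u mod 4 = 1" by (induction u) (simp_all add: mod_mult_right_eq[symmetric])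
  moreover have "(3 * 9^u) mod 4 = (3 * (9^u mod 4)) mod (4::nat)" by (rule mod_mult_right_eq[symmetric])
  ultimately show ?thesis by simp
qed

lemma inF_iff: "x \<in> FF \<longleftrightarrow> x ^ q = x" by (simp add: fixN_def)

lemma F_0 [simp]: "0 \<in> FF" and F_1 [simp]: "1 \<in> FF" using al0 by (simp_all add: fixN_def)
lemma F_add: "x \<in> FF \<Longrightarrow> y \<in> FF \<Longrightarrow> x + y \<in> FF"
  unfolding fixN_def mem_Collect_eq by (subst frobN) simp
lemma F_mult: "x \<in> FF \<Longrightarrow> y \<in> FF \<Longrightarrow> x * y \<in> FF"
  unfolding fixN_def mem_Collect_eq by (subst power_mult_distrib) simp
lemma F_neg: "x \<in> FF \<Longrightarrow> - x \<in> FF"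
  unfolding fixN_def mem_Collect_eq by (subst frob_neg) simp
lemma F_diff: "x \<in> FF \<Longrightarrow> y \<in> FF \<Longrightarrow> x - y \<in> FF"
  unfolding fixN_def mem_Collect_eq by (subst frob_diff) simp
lemma F_cube: "x \<in> FF \<Longrightarrow> x ^ 3 \<in> FF"
  unfolding fixN_def mem_Collect_eq by (metis power_mult mult.commute)
lemma F_inv: "x \<in> FF \<Longrightarrow> inverse x \<in> FF"
  unfolding fixN_def mem_Collect_eq by (subst power_inverse) simp

lemma neg1_nonsq: "t \<in> FF \<Longrightarrow> t * t \<noteq> - 1"
proof
  assume tF: "t \<in> FF" and tt: "t * t = -1"
  have t0: "t \<noteq> 0" using tt by auto
  have "q = 4 * (q div 4) + q mod 4" by simp
  then obtain u where u: "q = 2 * (2 * u + 1) + 1" using q_mod4 by (intro that[of "q div 4"]) simp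
  have "t ^ q = t" using tF by (simp add: inF_iff)
  have "t ^ q = (t ^ 2) ^ (2 * u + 1) * t" unfolding u by (simp only: power_add power_mult power_one_right)
  also have "\<dots> = - t" using tt by (simp add: power2_eq_square)
  finally have "t = - t" using \<open>t ^ q = t\<close> by simp
  hence "2 * t = 0" by simp
  thus False using t0 two_om by simp
qed

end

lemma four_om: "(4::om) = 1"
proof -
  have "(4::om) = 3 + 1" by simp
  thus ?thesis by (simp add: three_om)
qed

lemma sq_eq_1: "(x::om) * x = 1 \<Longrightarrow> x = 1 \<or> x = -1"
proof -
  assume "x * x = 1"
  hence "(x - 1) * (x + 1) = 0" by (simp add: algebra_simps)
  hence "x - 1 = 0 \<or> x + 1 = 0" by simp
  thus ?thesis by (metis eq_iff_diff_eq_0 add_eq_0_iff2)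
qed

context ctx begin

lemma q_odd: "odd q" by simp

lemma frob_quad: "(a * a - b * c + 1) ^ q = (a ^ q) * (a ^ q) - b ^ q * c ^ q + (1::om)"
  by (simp add: frob_diff frobN power_mult_distrib)

lemma sl_order:
  assumes tF: "tr A \<in> FF" and dA: "det A = 1" and t1: "tr A * tr A \<noteq> 1"
  shows "A ^ (q - 1) = 1 \<or> A ^ ((q + 1) div 2) = 1 \<or> A ^ ((q + 1) div 2) = - 1"
proof -
  define t where "t = tr A"
  obtain s :: om where s: "s ^ 2 = t * t - 4" using nth_root_exists[of 2 "t * t - 4"] by auto
  define l where "l = (t + s) / 2"
  have two: "(2::om) \<noteq> 0" by (rule two_om)
  have lr: "l * l - t * l + 1 = 0"
  proof -
    have l2: "2 * l = t + s" unfolding l_def using two by simp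
    have "4 * (l * l - t * l + 1) = (2 * l) * (2 * l) - 2 * t * (2 * l) + 4" by (simp add: algebra_simps)
    also have "\<dots> = (t + s) * (t + s) - 2 * t * (t + s) + 4" by (simp only: l2)
    also have "\<dots> = s ^ 2 - t * t + 4" by (simp add: algebra_simps power2_eq_square)
    also have "\<dots> = 0" using s by simp
    finally show ?thesis using four_om by simp
  qed
  have l1: "l * l \<noteq> 1"
  proof
    assume ll: "l * l = 1"
    hence tl: "t * l = 2" using lr by (simp add: algebra_simps)
    have "(t * t) * (l * l) = (t * l) * (t * l)" by (simp add: algebra_simps)
    hence "(t * t) * (l * l) = 4" using tl by simp
    hence "t * t = 1" using ll four_om by simp
    thus False using t1 t_def by simp
  qed
  have lr': "l * l - tr A * l + 1 = 0" using lr t_def by simp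
  define mu where "mu = inverse l"
  define E1 where "E1 = msc (inverse (l - mu)) (A - msc mu 1)"
  define E2 where "E2 = msc (inverse (l - mu)) (msc l 1 - A)"
  note ed = eigen_decomp[OF dA lr' l1, folded mu_def, folded E1_def E2_def]
  have l0: "l \<noteq> 0" using lr by auto
  have tq: "t ^ q = t" using tF t_def by (simp add: inF_iff)
  define L where "L = l ^ q"
  have "L * L - t * L + 1 = (l * l - t * l + 1) ^ q" unfolding L_def by (simp add: frob_quad tq)
  hence LL: "L * L - t * L + 1 = 0" using lr al0 by simp
  have "(L - l) * (L - mu) = L * L - (l + mu) * L + l * mu" by (simp add: algebra_simps)
  also have "\<dots> = L * L - t * L + 1" using ed(5) t_def l0 mu_def by simp
  finally have "(L - l) * (L - mu) = 0" using LL by simp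
  hence "L = l \<or> L = mu" by simp
  thus ?thesis
  proof
    assume "L = l"
    hence "l ^ (q - 1) * l = 1 * l" unfolding L_def
      by (metis power_Suc2 Suc_pred' mult_1 zero_less_numeral zero_less_power)
    hence lq: "l ^ (q - 1) = 1" using l0 by simp
    hence "mu ^ (q - 1) = 1" unfolding mu_def by (simp add: power_inverse)
    hence "A ^ (q - 1) = 1" using ed(1)[of "q - 1"] ed(2) lq by simp
    thus ?thesis by simp
  next
    assume "L = mu"
    hence lq1: "l ^ (q + 1) = 1" unfolding L_def mu_def using l0 by simp
    define h where "h = (q + 1) div 2"
    have qh: "q + 1 = 2 * h" unfolding h_def using q_odd by simp
    have "l ^ h * l ^ h = 1" using lq1 unfolding qh by (simp add: power_mult mult_2 power_add)
    hence lh: "l ^ h = 1 \<or> l ^ h = -1" by (rule sq_eq_1)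
    have muh: "mu ^ h = l ^ h" unfolding mu_def using lh by (auto simp: power_inverse)
    have "A ^ h = msc (l ^ h) (E1 + E2)" using ed(1)[of h] muh by (simp add: msc_add)
    hence "A ^ h = msc (l ^ h) 1" using ed(2) by simp
    hence "A ^ h = 1 \<or> A ^ h = -1" using lh by (auto simp: msc_neg1)
    thus ?thesis unfolding h_def by simp
  qed
qed

end

context ctx begin

definition inF :: "m2 \<Rightarrow> bool" where
  "inF P \<longleftrightarrow> e11 P \<in> FF \<and> e12 P \<in> FF \<and> e21 P \<in> FF \<and> e22 P \<in> FF"
definition VV :: "m2 set" where "VV = {P. inF P}"
definition SL :: "m2 set" where "SL = {A. inF A \<and> det A = 1}"
definition Gs :: "(m2 \<Rightarrow> m2) set" where "Gs = {phi e A | e A. (e = 1 \<or> e = -1) \<and> A \<in> SL}"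
definition Hg :: "(m2 \<times> (m2 \<Rightarrow> m2)) monoid" where
  "Hg = \<lparr>carrier = VV \<times> Gs, monoid.mult = (\<lambda>x y. (fst x + snd x (fst y), snd x \<circ> snd y)), one = (0, id)\<rparr>"

lemma Hg_simps [simp]: "carrier Hg = VV \<times> Gs" "x \<otimes>\<^bsub>Hg\<^esub> y = (fst x + snd x (fst y), snd x \<circ> snd y)"
  "\<one>\<^bsub>Hg\<^esub> = (0, id)"
  by (simp_all add: Hg_def)

lemma inF_add: "inF P \<Longrightarrow> inF Q \<Longrightarrow> inF (P + Q)" by (simp add: inF_def F_add)
lemma inF_neg: "inF P \<Longrightarrow> inF (- P)" by (simp add: inF_def F_neg)
lemma inF_mult: "inF P \<Longrightarrow> inF Q \<Longrightarrow> inF (P * Q)" by (simp add: inF_def F_add F_mult)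
lemma inF_fr: "inF P \<Longrightarrow> inF (fr P)" by (simp add: inF_def F_cube)
lemma inF_mT: "inF P \<Longrightarrow> inF (mT P)" by (simp add: inF_def)
lemma inF_msc: "s \<in> FF \<Longrightarrow> inF P \<Longrightarrow> inF (msc s P)" by (simp add: inF_def F_mult)
lemma inF_adj: "inF P \<Longrightarrow> inF (adj P)" by (simp add: inF_def F_neg)
lemma inF_0: "inF 0" and inF_1: "inF 1" by (simp_all add: inF_def)
lemma inF_tr: "inF P \<Longrightarrow> tr P \<in> FF" by (simp add: inF_def tr_def F_add)

lemma pm1_F: "e = 1 \<or> e = -1 \<Longrightarrow> e \<in> FF" using F_neg[OF F_1] by auto
lemma pm1_sq: "e = 1 \<or> e = -1 \<Longrightarrow> e * (e::om) = 1" by auto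

lemma phi_VV: "e = 1 \<or> e = -1 \<Longrightarrow> A \<in> SL \<Longrightarrow> P \<in> VV \<Longrightarrow> phi e A P \<in> VV"
  unfolding VV_def SL_def phi_def by (auto intro!: inF_msc inF_mult inF_mT inF_fr pm1_F)

lemma Gs_VV: "f \<in> Gs \<Longrightarrow> P \<in> VV \<Longrightarrow> f P \<in> VV"
  unfolding Gs_def using phi_VV by auto

lemma SL_mult: "A \<in> SL \<Longrightarrow> B \<in> SL \<Longrightarrow> A * B \<in> SL"
  unfolding SL_def by (simp add: inF_mult det_mult)

lemma SL_1: "1 \<in> SL" unfolding SL_def by (simp add: inF_1 det_def)

lemma SL_adj: "A \<in> SL \<Longrightarrow> adj A \<in> SL" unfolding SL_def by (simp add: inF_adj det_adj)

lemma Gs_comp: "f \<in> Gs \<Longrightarrow> g \<in> Gs \<Longrightarrow> f \<circ> g \<in> Gs"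
proof -
  assume "f \<in> Gs" "g \<in> Gs"
  then obtain e A e' B where f: "f = phi e A" "e = 1 \<or> e = -1" "A \<in> SL"
    and g: "g = phi e' B" "e' = 1 \<or> e' = -1" "B \<in> SL" unfolding Gs_def by blast
  have "f \<circ> g = phi (e * e') (A * B)" using f g by (simp add: phi_comp')
  moreover have "e * e' = 1 \<or> e * e' = -1" using f g by auto
  ultimately show ?thesis unfolding Gs_def using SL_mult f g by blast
qed

lemma Gs_id: "id \<in> Gs"
  unfolding Gs_def using phi_one SL_1 by force

lemma Gs_inv: "f \<in> Gs \<Longrightarrow> \<exists>g \<in> Gs. g \<circ> f = id \<and> f \<circ> g = id"
proof -
  assume "f \<in> Gs"
  then obtain e A where f: "f = phi e A" "e = 1 \<or> e = -1" "A \<in> SL" unfolding Gs_def by blast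
  have dA: "det A = 1" using f SL_def by simp
  have "phi e (adj A) \<in> Gs" unfolding Gs_def using f SL_adj by blast
  moreover have "phi e (adj A) \<circ> f = id" using f adj_mult1[OF dA] pm1_sq[OF f(2)] by (simp add: phi_comp' phi_one)
  moreover have "f \<circ> phi e (adj A) = id" using f adj_mult1[OF dA] pm1_sq[OF f(2)] by (simp add: phi_comp' phi_one)
  ultimately show ?thesis by blast
qed

lemma Gs_add: "f \<in> Gs \<Longrightarrow> f (P + Q) = f P + f Q"
  unfolding Gs_def using phi_add by auto

lemma Gs_zero: "f \<in> Gs \<Longrightarrow> f 0 = 0"
  unfolding Gs_def by auto

lemma Gs_neg: "f \<in> Gs \<Longrightarrow> f (- P) = - f P"
  unfolding Gs_def using phi_neg by auto

lemma VV_add: "P \<in> VV \<Longrightarrow> Q \<in> VV \<Longrightarrow> P + Q \<in> VV" unfolding VV_def by (simp add: inF_add)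
lemma VV_neg: "P \<in> VV \<Longrightarrow> - P \<in> VV" unfolding VV_def by (simp add: inF_neg)
lemma VV_0: "0 \<in> VV" unfolding VV_def by (simp add: inF_0)

end

context ctx begin
lemma group_Hg: "group Hg"
proof (rule groupI)
  fix x y assume "x \<in> carrier Hg" "y \<in> carrier Hg"
  then obtain P f Q g where xy: "x = (P, f)" "y = (Q, g)" "P \<in> VV" "f \<in> Gs" "Q \<in> VV" "g \<in> Gs"
    by (cases x, cases y) auto
  have "f Q \<in> VV" using Gs_VV xy by blast
  hence "P + f Q \<in> VV" using VV_add xy by blast
  moreover have "f \<circ> g \<in> Gs" using Gs_comp xy by blast
  ultimately show "x \<otimes>\<^bsub>Hg\<^esub> y \<in> carrier Hg" using xy by simp
next
  show "\<one>\<^bsub>Hg\<^esub> \<in> carrier Hg" using VV_0 Gs_id by simp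
next
  fix x y z assume "x \<in> carrier Hg" "y \<in> carrier Hg" "z \<in> carrier Hg"
  then obtain P f Q g R h where xyz: "x = (P, f)" "y = (Q, g)" "z = (R, h)" "f \<in> Gs"
    by (cases x, cases y, cases z) auto
  have "f (Q + g R) = f Q + f (g R)" using Gs_add xyz by blast
  thus "x \<otimes>\<^bsub>Hg\<^esub> y \<otimes>\<^bsub>Hg\<^esub> z = x \<otimes>\<^bsub>Hg\<^esub> (y \<otimes>\<^bsub>Hg\<^esub> z)"
    using xyz by (simp add: add.assoc comp_assoc)
next
  fix x assume "x \<in> carrier Hg" thus "\<one>\<^bsub>Hg\<^esub> \<otimes>\<^bsub>Hg\<^esub> x = x" by simp
next
  fix x assume x: "x \<in> carrier Hg"
  then obtain P f where xs: "x = (P, f)" "P \<in> VV" "f \<in> Gs" by (cases x) auto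
  then obtain g where g: "g \<in> Gs" "g \<circ> f = id" "f \<circ> g = id" using Gs_inv by blast
  have "g P \<in> VV" using Gs_VV g xs by blast
  hence "(- g P, g) \<in> carrier Hg" using g VV_neg by simp
  moreover have "(- g P, g) \<otimes>\<^bsub>Hg\<^esub> x = \<one>\<^bsub>Hg\<^esub>" using xs g by simp
  ultimately show "\<exists>y\<in>carrier Hg. y \<otimes>\<^bsub>Hg\<^esub> x = \<one>\<^bsub>Hg\<^esub>" by blast
qed
end

fun Sx :: "(m2 \<Rightarrow> m2) \<Rightarrow> m2 \<Rightarrow> nat \<Rightarrow> m2" where
  "Sx f P 0 = 0"
| "Sx f P (Suc n) = Sx f P n + (f ^^ n) P"

definition additive :: "(m2 \<Rightarrow> m2) \<Rightarrow> bool" where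
  "additive f \<longleftrightarrow> (\<forall>P Q. f (P + Q) = f P + f Q)"

lemma additive_zero: "additive f \<Longrightarrow> f 0 = 0"
proof -
  assume "additive f"
  hence "f (0 + 0) = f 0 + f 0" unfolding additive_def by blast
  thus "f 0 = 0" by simp
qed

lemma additive_pow: "additive f \<Longrightarrow> additive (f ^^ n)"
proof (induction n)
  case 0 thus ?case by (simp add: additive_def)
next
  case (Suc n) thus ?case by (simp add: additive_def)
qed

lemma Sx_f: "additive f \<Longrightarrow> f (Sx f P n) + P = Sx f P (Suc n)"
proof (induction n)
  case 0 thus ?case by (simp add: additive_zero)
next
  case (Suc n)
  have "f (Sx f P (Suc n)) + P = (f (Sx f P n) + P) + f ((f ^^ n) P)"
    using Suc.prems unfolding additive_def by (simp add: algebra_simps)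
  also have "\<dots> = Sx f P (Suc n) + (f ^^ Suc n) P" using Suc by simp
  finally show ?case by simp
qed

lemma Sx_fpf:
  assumes "additive f" "f ^^ n = id" "\<And>Q. f Q = Q \<Longrightarrow> Q = 0"
  shows "Sx f P n = 0"
proof -
  have "f (Sx f P n) + P = Sx f P n + P" using Sx_f[OF assms(1)] assms(2) by simp
  hence "f (Sx f P n) = Sx f P n" by simp
  thus ?thesis using assms(3) by blast
qed

lemma Sx_add: "additive f \<Longrightarrow> Sx f P (a + b) = Sx f P a + (f ^^ a) (Sx f P b)"
proof (induction b)
  case 0 thus ?case using additive_zero[OF additive_pow[OF 0]] by simp
next
  case (Suc b)
  have "Sx f P (a + Suc b) = Sx f P (a + b) + (f ^^ (a + b)) P" by simp
  also have "\<dots> = Sx f P a + (f ^^ a) (Sx f P b) + (f ^^ a) ((f ^^ b) P)"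
    using Suc by (simp add: funpow_add)
  also have "\<dots> = Sx f P a + (f ^^ a) (Sx f P (Suc b))"
    using additive_pow[OF Suc.prems, of a] unfolding additive_def by (simp add: add.assoc)
  finally show ?case .
qed

lemma Sx_period3:
  assumes "additive f" "f ^^ p = id"
  shows "Sx f P (3 * p) = 0"
proof -
  have pp: "Sx f P (p + p) = Sx f P p + Sx f P p" using Sx_add[OF assms(1), of P p p] assms(2) by simp
  have e3: "3 * p = p + (p + p)" by simp
  have "Sx f P (3 * p) = Sx f P p + Sx f P (p + p)"
    unfolding e3 using Sx_add[OF assms(1), of P p "p + p"] assms(2) by simp
  hence "Sx f P (3 * p) = Sx f P p + (Sx f P p + Sx f P p)" using pp by simp
  thus ?thesis using three_m2 by (simp add: add.assoc)
qed

lemma Sx_zero: "additive f \<Longrightarrow> Sx f 0 n = 0"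
  by (induction n) (simp_all add: additive_zero additive_pow)

lemma phi_additive: "additive (phi e A)" unfolding additive_def by (simp add: phi_add)

context ctx begin

lemma Gs_additive: "f \<in> Gs \<Longrightarrow> additive f" unfolding Gs_def using phi_additive by auto

lemma pow_Hg: "(P, f) [^]\<^bsub>Hg\<^esub> n = (Sx f P n, f ^^ n)"
proof (induction n)
  case 0 thus ?case by (simp add: id_def)
next
  case (Suc n) thus ?case by (simp del: funpow.simps add: funpow_Suc_right comp_def)
qed

lemma pow_Hg_one: "(P, f) [^]\<^bsub>Hg\<^esub> n = \<one>\<^bsub>Hg\<^esub> \<longleftrightarrow> Sx f P n = 0 \<and> f ^^ n = id"
  by (simp add: pow_Hg)

lemma A3: "det A = 1 \<Longrightarrow> A ^ 3 = - msc (tr A) 1 + msc (tr A * tr A - 1) A"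
proof -
  assume dA: "det A = 1"
  have AA: "A * A = msc (tr A) A - 1" using cayley_hamilton[of A] dA by simp
  have "A ^ 3 = A * (A * A)" by (simp add: power3_eq_cube mult.assoc)
  also have "\<dots> = msc (tr A) (A * A) - A" by (simp add: AA right_diff_distrib msc_mult_right)
  also have "\<dots> = - msc (tr A) 1 + msc (tr A * tr A - 1) A"
    by (simp add: AA m2_eq_iff algebra_simps)
  finally show ?thesis .
qed

lemma pm_pow_even: "e = 1 \<or> e = -1 \<Longrightarrow> even n \<Longrightarrow> e ^ n = (1::om)"
  by auto

lemma phi_pm1: "phi 1 (msc s 1) = id" if "s = 1 \<or> s = -1"
  using that by (auto simp: msc_neg1 phi_negA phi_one)

lemma q_div4: "q = 4 * (q div 4) + 3"
  using div_mult_mod_eq[of q 4] q_mod4 by simp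

lemma h_even: "even ((q + 1) div 2)"
proof -
  have "(q + 1) div 2 = 2 * (q div 4 + 1)" using q_div4 by simp
  thus ?thesis by simp
qed

lemma ord_bound:
  assumes x: "x \<in> carrier Hg"
  shows "\<exists>d \<in> {6, 9, q - 1, (q + 1) div 2}. x [^]\<^bsub>Hg\<^esub> d = \<one>\<^bsub>Hg\<^esub>"
proof -
  obtain P f where xs: "x = (P, f)" "P \<in> VV" "f \<in> Gs" using x by (cases x) auto
  then obtain e A where f: "f = phi e A" "e = 1 \<or> e = -1" "A \<in> SL" unfolding Gs_def by blast
  have dA: "det A = 1" and tF: "tr A \<in> FF" using f(3) by (auto simp: SL_def inF_tr)
  define t where "t = tr A"
  have add: "additive f" using f phi_additive by simp
  have ee: "e * e = 1" using f(2) by auto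
  have fpow: "f ^^ n = phi (e ^ n) (A ^ n)" for n using f by (simp add: phi_pow)
  have fix_tr: "t = e * t ^ 3" if "f Q = Q" "Q \<noteq> 0" for Q
    using fixed_point_trace[OF dA ee] that f t_def by simp
  consider (a) "t * t = 1" | (b) "t = 0" | (c) "t * t \<noteq> 1" "t \<noteq> 0" by blast
  thus ?thesis
  proof cases
    case a
    have A3': "A ^ 3 = msc (- t) 1" using A3[OF dA] a t_def by (simp add: m2_eq_iff)
    have mt: "- t = 1 \<or> - t = -1" using sq_eq_1[OF a] by auto
    show ?thesis
    proof (cases "e = 1")
      case True
      have f3: "f ^^ 3 = id" using fpow[of 3] True A3' phi_pm1[OF mt] by simp
      have "(f ^^ 3) ^^ 3 = f ^^ (3 * 3)" by (rule funpow_mult)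
      hence "f ^^ 9 = id" using f3 by (simp add: id_funpow)
      moreover have "Sx f P 9 = 0" using Sx_period3[OF add f3] by simp
      ultimately have "x [^]\<^bsub>Hg\<^esub> (9::nat) = \<one>\<^bsub>Hg\<^esub>" using xs pow_Hg_one by simp
      thus ?thesis by blast
    next
      case False
      hence e: "e = -1" using f by auto
      have "A ^ 6 = A ^ 3 * A ^ 3" by (simp flip: power_add)
      also have "\<dots> = msc (t * t) 1" using A3' by (simp add: msc_mult_left msc_mult_right msc_msc)
      finally have "A ^ 6 = 1" using a by simp
      hence f6: "f ^^ 6 = id" using fpow[of 6] e phi_one by simp
      have "Sx f P 6 = 0"
      proof (rule Sx_fpf[OF add f6])
        fix Q assume fQ: "f Q = Q"
        show "Q = 0"
        proof (rule ccontr)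
          assume "Q \<noteq> 0"
          hence "t = - (t * (t * t))" using fix_tr[OF fQ] e by (simp add: power3_eq_cube mult.assoc)
          hence "2 * t = 0" using a by simp
          thus False using a two_om by simp
        qed
      qed
      hence "x [^]\<^bsub>Hg\<^esub> (6::nat) = \<one>\<^bsub>Hg\<^esub>" using xs f6 pow_Hg_one by simp
      thus ?thesis by blast
    qed
  next
    case b
    have "A * A = - 1" using cayley_hamilton[of A] dA b t_def by (simp add: msc_neg1)
    hence "A ^ 2 = msc (-1) 1" by (simp add: power2_eq_square msc_neg1)
    hence f2: "f ^^ 2 = id" using fpow[of 2] f(2) phi_pm1[of "-1"] by (auto simp: power2_eq_square)
    have "(f ^^ 2) ^^ 3 = f ^^ (2 * 3)" by (rule funpow_mult)
    hence "f ^^ 6 = id" using f2 by (simp add: id_funpow)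
    moreover have "Sx f P 6 = 0" using Sx_period3[OF add f2] by simp
    ultimately have "x [^]\<^bsub>Hg\<^esub> (6::nat) = \<one>\<^bsub>Hg\<^esub>" using xs pow_Hg_one by simp
    thus ?thesis by blast
  next
    case c
    have fpf: "Q = 0" if fQ: "f Q = Q" for Q
    proof (rule ccontr)
      assume Q0: "Q \<noteq> 0"
      have tt: "t = e * (t * (t * t))" using fix_tr[OF fQ Q0] by (simp add: power3_eq_cube)
      show False
      proof (cases "e = 1")
        case True
        hence "t * (t * t - 1) = 0" using tt by (simp add: algebra_simps)
        thus False using c by simp
      next
        case False
        hence "e = -1" using f by auto
        hence "t = - (t * (t * t))" using tt by simp
        hence "t + t * (t * t) = 0" by (simp add: eq_neg_iff_add_eq_0)
        hence "t * (t * t + 1) = 0" by (simp add: algebra_simps)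
        hence "t * t = - 1" using c by (simp add: add_eq_0_iff2)
        thus False using neg1_nonsq tF t_def by simp
      qed
    qed
    have "A ^ (q - 1) = 1 \<or> A ^ ((q + 1) div 2) = 1 \<or> A ^ ((q + 1) div 2) = - 1"
      using sl_order[OF tF dA] c t_def by simp
    thus ?thesis
    proof (rule disjE)
      assume Aq: "A ^ (q - 1) = 1"
      have "even (q - 1)" by simp
      hence "e ^ (q - 1) = 1" using f(2) by (rule pm_pow_even[rotated])
      hence fq: "f ^^ (q - 1) = id" using fpow Aq phi_one by simp
      have "Sx f P (q - 1) = 0" by (rule Sx_fpf[OF add fq fpf])
      hence "x [^]\<^bsub>Hg\<^esub> (q - 1) = \<one>\<^bsub>Hg\<^esub>" using xs fq pow_Hg_one by simp
      thus ?thesis by blast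
    next
      assume Ah: "A ^ ((q + 1) div 2) = 1 \<or> A ^ ((q + 1) div 2) = - 1"
      obtain h where h_def: "h = (q + 1) div 2" by blast
      have "even h" unfolding h_def by (rule h_even)
      hence "e ^ h = 1" using f(2) by (rule pm_pow_even[rotated])
      hence fq: "f ^^ h = id" using fpow Ah phi_one phi_pm1[of "-1"] unfolding h_def[symmetric]
        by (auto simp: msc_neg1)
      have "Sx f P h = 0" by (rule Sx_fpf[OF add fq fpf])
      hence "x [^]\<^bsub>Hg\<^esub> h = \<one>\<^bsub>Hg\<^esub>" using xs fq pow_Hg_one[of P f h] by simp
      thus ?thesis unfolding h_def by blast
    qed
  qed
qed

end

lemma three_om': "(3::om) = 0" by (rule three_om)

definition U0 :: m2 where "U0 = M 1 1 0 1"

lemma U0_pow: "U0 ^ 2 = M 1 2 0 1" "U0 ^ 3 = 1"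
proof -
  show "U0 ^ 2 = M 1 2 0 1" by (simp add: U0_def power2_eq_square m2_eq_iff)
  have "U0 ^ 3 = M 1 3 0 1" by (simp add: U0_def power3_eq_cube m2_eq_iff)
  thus "U0 ^ 3 = 1" by (simp add: three_om m2_eq_iff)
qed

lemma div6: "d dvd (6::nat) \<Longrightarrow> d = 1 \<or> d = 2 \<or> d = 3 \<or> d = 6"
proof -
  assume d: "d dvd 6"
  hence "d \<le> 6" by (rule dvd_imp_le) simp
  hence "d \<in> {0,1,2,3,4,5,6}" by auto
  thus ?thesis using d by (auto simp: dvd_eq_mod_eq_0)
qed

lemma div9: "d dvd (9::nat) \<Longrightarrow> d = 1 \<or> d = 3 \<or> d = 9"
proof -
  assume d: "d dvd 9"
  hence "d \<le> 9" by (rule dvd_imp_le) simp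
  hence "d \<in> {0,1,2,3,4,5,6,7,8,9}" by auto
  thus ?thesis using d by (auto simp: dvd_eq_mod_eq_0)
qed

context ctx begin

lemma ord_eq_I:
  assumes "x \<in> carrier Hg" "\<And>n. x [^]\<^bsub>Hg\<^esub> n = \<one>\<^bsub>Hg\<^esub> \<longleftrightarrow> d dvd n"
  shows "group.ord Hg x = d"
  using group.ord_unique[OF group_Hg assms(1)] assms(2) by blast

lemma U0_SL: "U0 \<in> SL" unfolding SL_def U0_def inF_def det_def by simp

lemma pm1_cases: "(x::om) = 1 \<or> x = -1 \<Longrightarrow> x \<noteq> 0" by auto

lemma elem6: "\<exists>x \<in> carrier Hg. group.ord Hg x = 6"
proof -
  define f where "f = phi (-1) U0"
  have fG: "f \<in> Gs" unfolding Gs_def f_def using U0_SL by blast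
  have x: "(0, f) \<in> carrier Hg" using fG VV_0 by simp
  have addf: "additive f" unfolding f_def by (rule phi_additive)
  have fp: "f ^^ n = phi ((-1) ^ n) (U0 ^ n)" for n unfolding f_def by (rule phi_pow)
  have pw: "(0, f) [^]\<^bsub>Hg\<^esub> n = \<one>\<^bsub>Hg\<^esub> \<longleftrightarrow> f ^^ n = id" for n
    using pow_Hg_one[of 0 f n] Sx_zero[OF addf] by simp
  have "U0 ^ (3 * 2) = (U0 ^ 3) ^ 2" by (rule power_mult)
  hence U6: "U0 ^ 6 = 1" using U0_pow by simp
  have f6: "f ^^ 6 = id" using fp[of 6] U6 phi_one by simp
  have f2: "f ^^ 2 \<noteq> id"
  proof
    assume "f ^^ 2 = id"
    hence "phi 1 (M 1 2 0 1) = id" using fp[of 2] U0_pow by simp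
    hence "M 1 2 0 1 = 1 \<or> M 1 2 0 1 = - 1" using phi_id[of 1 "M 1 2 0 1"] by (simp add: det_def)
    thus False using two_om by (auto simp: m2_eq_iff)
  qed
  have f3: "f ^^ 3 \<noteq> id"
  proof
    assume "f ^^ 3 = id"
    hence "phi (-1) 1 = id" using fp[of 3] U0_pow by simp
    hence "(-1::om) = 1" using phi_id[of "-1" 1] by (simp add: det_def)
    thus False using two_om by (simp add: eq_neg_iff_add_eq_0)
  qed
  have "group.ord Hg (0, f) = 6"
  proof -
    interpret group Hg by (rule group_Hg)
    have d6: "ord (0, f) dvd 6" using pow_eq_id[OF x] pw f6 by blast
    have n2: "\<not> ord (0, f) dvd 2" using pow_eq_id[OF x] pw f2 by blast
    have n3: "\<not> ord (0, f) dvd 3" using pow_eq_id[OF x] pw f3 by blast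
    show ?thesis using div6[OF d6] n2 n3 by auto
  qed
  thus ?thesis using x by blast
qed

lemma elem9: "\<exists>x \<in> carrier Hg. group.ord Hg x = 9"
proof -
  define f where "f = phi 1 U0"
  define P where "P = M 0 0 0 1"
  have fG: "f \<in> Gs" unfolding Gs_def f_def using U0_SL by blast
  have PV: "P \<in> VV" unfolding VV_def inF_def P_def by simp
  have x: "(P, f) \<in> carrier Hg" using fG PV by simp
  have addf: "additive f" unfolding f_def by (rule phi_additive)
  have fp: "f ^^ n = phi (1 ^ n) (U0 ^ n)" for n unfolding f_def by (rule phi_pow)
  have f3: "f ^^ 3 = id" using fp[of 3] U0_pow phi_one by simp
  have "(f ^^ 3) ^^ 3 = f ^^ (3 * 3)" by (rule funpow_mult)
  hence f9: "f ^^ 9 = id" using f3 by simp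
  have S9: "Sx f P 9 = 0" using Sx_period3[OF addf f3] by simp
  have fP: "f P = M 1 1 1 1" unfolding f_def P_def phi_def U0_def by (simp add: m2_eq_iff)
  have ffP: "f (M 1 1 1 1) = M 1 2 2 1"
  proof -
    have "f (M 1 1 1 1) = M 4 2 2 1" unfolding f_def phi_def U0_def by (simp add: m2_eq_iff)
    thus ?thesis using four_om by simp
  qed
  have "Sx f P 3 = P + f P + f (f P)" by (simp add: numeral_3_eq_3)
  hence "Sx f P 3 = M 2 3 3 3" unfolding fP ffP by (simp add: P_def m2_eq_iff)
  hence S3: "Sx f P 3 \<noteq> 0" using two_om by (simp add: m2_eq_iff)
  have "group.ord Hg (P, f) = 9"
  proof -
    interpret group Hg by (rule group_Hg)
    have d9: "ord (P, f) dvd 9" using pow_eq_id[OF x] pow_Hg_one f9 S9 by blast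
    have n3: "\<not> ord (P, f) dvd 3" using pow_eq_id[OF x] pow_Hg_one S3 by blast
    show ?thesis using div9[OF d9] n3 by auto
  qed
  thus ?thesis using x by blast
qed

end

context ctx begin

lemma omega_ex: "\<exists>w::om. w ^ (q * q) = w \<and> w \<noteq> 0 \<and> (\<forall>n. w ^ n = 1 \<longleftrightarrow> (q * q - 1) dvd n)"
proof -
  have "2 * al > 0" using al0 by simp
  from exists_gen[OF this] obtain w where w: "w \<in> fixN (3 ^ (2 * al))" "w \<noteq> 0"
    "\<forall>n. w ^ n = 1 \<longleftrightarrow> (3 ^ (2 * al) - 1) dvd n" by blast
  have qq: "(3::nat) ^ (2 * al) = q * q" by (simp add: power_mult_distrib power_add mult_2 flip: power_add)
  show ?thesis using w unfolding qq fixN_def by auto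
qed

lemma qq1: "q * q - 1 = (q - 1) * (q + 1)"
proof -
  have "q \<ge> 1" using q_ge by simp
  thus ?thesis by (simp add: algebra_simps diff_mult_distrib2)
qed

lemma gamma_ex: "\<exists>g::om. g \<in> FF \<and> g \<noteq> 0 \<and> (\<forall>n. g ^ n = 1 \<longleftrightarrow> (q - 1) dvd n)"
proof -
  obtain w :: om where w: "w ^ (q * q) = w" "w \<noteq> 0" "\<forall>n. w ^ n = 1 \<longleftrightarrow> (q * q - 1) dvd n"
    using omega_ex by blast
  define g where "g = w ^ (q + 1)"
  have "g ^ q = w ^ (q * q) * w ^ q" unfolding g_def by (simp add: power_mult[symmetric] power_add algebra_simps)
  also have "\<dots> = g" unfolding g_def using w(1) by (simp add: power_add)
  finally have gF: "g \<in> FF" by (simp add: fixN_def)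
  have g0: "g \<noteq> 0" unfolding g_def using w(2) by simp
  have "g ^ n = 1 \<longleftrightarrow> (q - 1) dvd n" for n
  proof -
    have "g ^ n = w ^ ((q + 1) * n)" unfolding g_def by (simp only: power_mult)
    hence "g ^ n = 1 \<longleftrightarrow> (q - 1) * (q + 1) dvd (q + 1) * n" using w(3) qq1 by simp
    also have "\<dots> \<longleftrightarrow> (q + 1) * (q - 1) dvd (q + 1) * n" by (simp only: mult.commute[of "q - 1"])
    also have "\<dots> \<longleftrightarrow> (q - 1) dvd n" by (simp only: nat_mult_dvd_cancel_disj) simp
    finally show ?thesis .
  qed
  thus ?thesis using gF g0 by blast
qed

lemma lambda_ex: "\<exists>l::om. l \<noteq> 0 \<and> l ^ q = inverse l \<and> (\<forall>n. l ^ n = 1 \<longleftrightarrow> (q + 1) dvd n)"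
proof -
  obtain w :: om where w: "w ^ (q * q) = w" "w \<noteq> 0" "\<forall>n. w ^ n = 1 \<longleftrightarrow> (q * q - 1) dvd n"
    using omega_ex by blast
  define l where "l = w ^ (q - 1)"
  have l0: "l \<noteq> 0" unfolding l_def using w(2) by simp
  have ln: "l ^ n = 1 \<longleftrightarrow> (q + 1) dvd n" for n
  proof -
    have "l ^ n = w ^ ((q - 1) * n)" unfolding l_def by (simp only: power_mult)
    hence "l ^ n = 1 \<longleftrightarrow> (q - 1) * (q + 1) dvd (q - 1) * n" using w(3) qq1 by simp
    also have "\<dots> \<longleftrightarrow> (q + 1) dvd n"
    proof -
      have "q - 1 \<noteq> 0" using q_ge by simp
      thus ?thesis by (simp only: nat_mult_dvd_cancel_disj) simp
    qed
    finally show ?thesis .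
  qed
  have "l ^ (q + 1) = 1" using ln[of "q + 1"] by simp
  hence "l ^ q * l = 1" by (simp add: power_add mult.commute)
  hence "l ^ q = inverse l" using l0 by (simp add: field_simps)
  thus ?thesis using l0 ln by blast
qed

end

context ctx begin

lemma qm1_dvd: "(q - 1) dvd 2 * n \<Longrightarrow> even n \<Longrightarrow> (q - 1) dvd n"
proof -
  assume a: "(q - 1) dvd 2 * n" and en: "even n"
  obtain k where k: "n = 2 * k" using en by blast
  define m where "m = q div 4 * 2 + 1"
  have qm: "q - 1 = 2 * m" unfolding m_def using q_div4 by simp
  have om: "odd m" unfolding m_def by simp
  have "2 * m dvd 2 * (2 * k)" using a qm k by simp
  hence "m dvd 2 * k" by (simp only: nat_mult_dvd_cancel_disj) simp
  hence "m dvd k" using om by (simp add: coprime_dvd_mult_right_iff)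
  thus ?thesis using qm k by simp
qed

lemma neg1_pow: "(-1::om) ^ n = 1 \<Longrightarrow> even n"
proof (rule ccontr)
  assume "(-1::om) ^ n = 1" "odd n"
  hence "(-1::om) = 1" by simp
  thus False using two_om by (simp add: eq_neg_iff_add_eq_0)
qed

lemma det_pow: "det A = 1 \<Longrightarrow> det (A ^ n) = 1"
proof (induction n)
  case 0 thus ?case by (simp add: det_def)
next
  case (Suc n) thus ?case by (simp add: det_mult)
qed

lemma elem_qm1: "\<exists>x \<in> carrier Hg. group.ord Hg x = q - 1"
proof -
  obtain g :: om where g: "g \<in> FF" "g \<noteq> 0" "\<forall>n. g ^ n = 1 \<longleftrightarrow> (q - 1) dvd n"
    using gamma_ex by blast
  define D where "D = M g 0 0 (inverse g)"
  have DSL: "D \<in> SL" unfolding SL_def D_def inF_def det_def using g F_inv by simp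
  have Dn: "D ^ n = M (g ^ n) 0 0 (inverse g ^ n)" for n
    unfolding D_def by (induction n) (simp_all add: m2_eq_iff)
  define f where "f = phi (-1) D"
  have fG: "f \<in> Gs" unfolding Gs_def f_def using DSL by blast
  have x: "(0, f) \<in> carrier Hg" using fG VV_0 by simp
  have addf: "additive f" unfolding f_def by (rule phi_additive)
  have fp: "f ^^ n = phi ((-1) ^ n) (D ^ n)" for n unfolding f_def by (rule phi_pow)
  have pw: "(0, f) [^]\<^bsub>Hg\<^esub> n = \<one>\<^bsub>Hg\<^esub> \<longleftrightarrow> f ^^ n = id" for n
    using pow_Hg_one[of 0 f n] Sx_zero[OF addf] by simp
  have key: "f ^^ n = id \<longleftrightarrow> (q - 1) dvd n" for n
  proof
    assume fid: "f ^^ n = id"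
    have dD: "det (D ^ n) = 1" using DSL det_pow by (simp add: SL_def)
    have ee: "(-1::om) ^ n * (-1) ^ n = 1"
    proof -
      have "(-1::om) ^ n * (-1) ^ n = ((-1) * (-1)) ^ n" by (rule power_mult_distrib[symmetric])
      thus ?thesis by simp
    qed
    have fid': "phi ((-1) ^ n) (D ^ n) = id" using fid fp by simp
    have pi: "(-1::om) ^ n = 1 \<and> (D ^ n = 1 \<or> D ^ n = -1)" by (rule phi_id[OF fid' dD ee])
    hence en: "even n" using neg1_pow by blast
    have "e11 (D ^ n) = 1 \<or> e11 (D ^ n) = -1" using pi by auto
    hence gn: "g ^ n = 1 \<or> g ^ n = -1" unfolding Dn by simp
    have "g ^ (n * 2) = (g ^ n) ^ 2" by (rule power_mult)
    also have "\<dots> = 1" using gn by auto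
    finally have "g ^ (2 * n) = 1" by (simp add: mult.commute)
    hence "(q - 1) dvd 2 * n" using g(3) by blast
    thus "(q - 1) dvd n" using en by (rule qm1_dvd)
  next
    assume d: "(q - 1) dvd n"
    have "even (q - 1)" by simp
    hence en: "even n" using d by (rule dvd_trans)
    have gn: "g ^ n = 1" using g(3) d by blast
    have "inverse g ^ n = 1" using gn by (simp add: power_inverse)
    hence "D ^ n = 1" unfolding Dn using gn by (simp add: m2_eq_iff)
    moreover have "(-1::om) ^ n = 1" using en by simp
    ultimately show "f ^^ n = id" using fp phi_one by simp
  qed
  have pk: "(0, f) [^]\<^bsub>Hg\<^esub> n = \<one>\<^bsub>Hg\<^esub> \<longleftrightarrow> (q - 1) dvd n" for n
    using pw[of n] key[of n] by blast
  have "group.ord Hg (0, f) = q - 1" by (rule ord_eq_I[OF x pk])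
  thus ?thesis using x by blast
qed

end

lemma msc1_pow: "(msc s 1) ^ c = msc (s ^ c) 1"
  by (induction c) (simp_all add: msc_mult_left msc_msc)

lemma pm1_pow: "(s::om) = 1 \<or> s = -1 \<Longrightarrow> s ^ c = 1 \<or> s ^ c = -1"
proof -
  assume "s = 1 \<or> s = -1"
  moreover have "(-1::om) ^ c = 1 \<or> (-1::om) ^ c = -1" by (cases "even c") auto
  ultimately show ?thesis by auto
qed

lemma tr_neg1: "tr (- 1) = - 2" by (simp add: tr_def)

context ctx begin

lemma elem_h: "\<exists>x \<in> carrier Hg. group.ord Hg x = (q + 1) div 2"
proof -
  obtain l :: om where l: "l \<noteq> 0" "l ^ q = inverse l" "\<forall>n. l ^ n = 1 \<longleftrightarrow> (q + 1) dvd n"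
    using lambda_ex by blast
  define mu where "mu = inverse l"
  define t where "t = l + mu"
  have tq: "t ^ q = t" unfolding t_def mu_def using l by (simp add: frobN power_inverse)
  hence tF: "t \<in> FF" by (simp add: fixN_def)
  define C where "C = M 0 (-1) 1 t"
  have CSL: "C \<in> SL" unfolding SL_def C_def inF_def det_def using tF F_neg[OF F_1] by simp
  have dC: "det C = 1" using CSL by (simp add: SL_def)
  have trC: "tr C = t" unfolding C_def tr_def by simp
  have lmu: "l * mu = 1" unfolding mu_def using l by simp
  have lr: "l * l - tr C * l + 1 = 0" unfolding trC t_def using lmu by (simp add: algebra_simps)
  have l1: "l * l \<noteq> 1"
  proof
    assume "l * l = 1"
    hence "l ^ 2 = 1" by (simp add: power2_eq_square)
    hence "(q + 1) dvd 2" using l(3) by blast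
    hence "q + 1 \<le> 2" by (rule dvd_imp_le) simp
    thus False using q_ge by simp
  qed
  define E1 where "E1 = msc (inverse (l - mu)) (C - msc mu 1)"
  define E2 where "E2 = msc (inverse (l - mu)) (msc l 1 - C)"
  note ed = eigen_decomp[OF dC lr l1, folded mu_def, folded E1_def E2_def]
  define f where "f = phi 1 C"
  have fG: "f \<in> Gs" unfolding Gs_def f_def using CSL by blast
  have x: "(0, f) \<in> carrier Hg" using fG VV_0 by simp
  have addf: "additive f" unfolding f_def by (rule phi_additive)
  have fp: "f ^^ n = phi 1 (C ^ n)" for n unfolding f_def phi_pow by simp
  have pw: "(0, f) [^]\<^bsub>Hg\<^esub> n = \<one>\<^bsub>Hg\<^esub> \<longleftrightarrow> f ^^ n = id" for n
    using pow_Hg_one[of 0 f n] Sx_zero[OF addf] by simp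
  obtain h where h_def: "h = (q + 1) div 2" by blast
  have qh: "q + 1 = 2 * h" unfolding h_def using q_odd by simp
  have trCn: "tr (C ^ n) = l ^ n + mu ^ n" for n
    using ed(1)[of n] ed(3) ed(4) by (simp add: tr_add tr_msc)
  have key: "f ^^ n = id \<longleftrightarrow> h dvd n" for n
  proof
    assume fid: "f ^^ n = id"
    have fid': "phi 1 (C ^ n) = id" using fid fp by simp
    have "det (C ^ n) = 1" using dC det_pow by blast
    from phi_id[OF fid' this] have Cn: "C ^ n = 1 \<or> C ^ n = -1" by simp
    obtain eps :: om where eps: "eps = 1 \<or> eps = -1" "l ^ n + mu ^ n = 2 * eps"
    proof (cases "C ^ n = 1")
      case True
      hence "l ^ n + mu ^ n = 2 * 1" using trCn[of n] by (simp add: tr_def)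
      thus ?thesis using that by blast
    next
      case False
      hence "C ^ n = -1" using Cn by simp
      hence "l ^ n + mu ^ n = 2 * (-1)" using trCn[of n] tr_neg1 by simp
      thus ?thesis using that by blast
    qed
    define a where "a = l ^ n"
    define b where "b = mu ^ n"
    have ab: "a * b = 1" unfolding a_def b_def using lmu by (simp flip: power_mult_distrib)
    have ee: "eps * eps = 1" using eps(1) by auto
    have "(a - eps) * (a - eps) = a * a - (a + b) * a + 1"
      using eps(2) ee unfolding a_def[symmetric] b_def[symmetric] by (simp add: algebra_simps)
    also have "\<dots> = 0" using ab by (simp add: algebra_simps)
    finally have "a = eps" by simp
    hence "a * a = 1" using ee by simp
    hence "l ^ (2 * n) = 1" unfolding a_def by (simp add: power_mult mult.commute power2_eq_square)
    hence "(q + 1) dvd 2 * n" using l(3) by blast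
    hence "2 * h dvd 2 * n" using qh by simp
    thus "h dvd n" by (simp only: nat_mult_dvd_cancel_disj) simp
  next
    assume "h dvd n"
    then obtain c where c: "n = h * c" by blast
    have "l ^ (2 * h) = 1" using l(3) qh by simp
    hence "l ^ h * l ^ h = 1" by (simp add: mult_2 power_add)
    hence lh: "l ^ h = 1 \<or> l ^ h = -1" by (rule sq_eq_1)
    have muh: "mu ^ h = l ^ h" unfolding mu_def using lh by (auto simp: power_inverse)
    have "C ^ h = msc (l ^ h) (E1 + E2)" using ed(1)[of h] muh by (simp add: msc_add)
    hence Ch: "C ^ h = msc (l ^ h) 1" using ed(2) by simp
    have "C ^ n = (C ^ h) ^ c" unfolding c by (rule power_mult)
    also have "\<dots> = msc ((l ^ h) ^ c) 1" unfolding Ch by (rule msc1_pow)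
    finally have "C ^ n = msc ((l ^ h) ^ c) 1" .
    moreover have "(l ^ h) ^ c = 1 \<or> (l ^ h) ^ c = -1" using lh by (rule pm1_pow)
    ultimately show "f ^^ n = id" using fp phi_pm1 by simp
  qed
  have pk: "(0, f) [^]\<^bsub>Hg\<^esub> n = \<one>\<^bsub>Hg\<^esub> \<longleftrightarrow> h dvd n" for n
    using pw[of n] key[of n] by blast
  have "group.ord Hg (0, f) = h" by (rule ord_eq_I[OF x pk])
  thus ?thesis using x unfolding h_def by blast
qed

end

context ctx begin

lemma VV_eq: "VV = (\<lambda>(a, b, c, d). M a b c d) ` (FF \<times> FF \<times> FF \<times> FF)"
proof
  show "VV \<subseteq> (\<lambda>(a, b, c, d). M a b c d) ` (FF \<times> FF \<times> FF \<times> FF)"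
  proof
    fix P assume "P \<in> VV"
    hence "(e11 P, e12 P, e21 P, e22 P) \<in> FF \<times> FF \<times> FF \<times> FF" by (simp add: VV_def inF_def)
    moreover have "P = (\<lambda>(a, b, c, d). M a b c d) (e11 P, e12 P, e21 P, e22 P)" by (cases P) simp
    ultimately show "P \<in> (\<lambda>(a, b, c, d). M a b c d) ` (FF \<times> FF \<times> FF \<times> FF)" by blast
  qed
qed (auto simp: VV_def inF_def)

lemma finite_FF: "finite FF" using finite_fixN[OF al0] .

lemma card_VV: "card VV = 3 ^ (4 * al)"
proof -
  have "inj_on (\<lambda>(a, b, c, d). M a b c d) (FF \<times> FF \<times> FF \<times> FF)" by (auto simp: inj_on_def)
  hence "card VV = card (FF \<times> FF \<times> FF \<times> FF)" unfolding VV_eq by (rule card_image)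
  also have "\<dots> = q * (q * (q * q))" using card_fixN[OF al0] by (simp add: card_cartesian_product)
  also have "\<dots> = 3 ^ (4 * al)" by (simp add: power_mult power4_eq_xxxx flip: power_mult_distrib)
  finally show ?thesis .
qed

lemma finite_VV: "finite VV" unfolding VV_eq using finite_FF by simp

lemma finite_Gs: "finite Gs"
proof -
  have "SL \<subseteq> VV" unfolding SL_def VV_def by auto
  hence fSL: "finite SL" using finite_VV finite_subset by blast
  have "Gs = (\<lambda>(e, A). phi e A) ` ({1, -1} \<times> SL)" unfolding Gs_def by auto
  thus ?thesis using fSL by simp
qed

lemma finite_Hg: "finite (carrier Hg)" using finite_VV finite_Gs by simp

definition NN :: "(m2 \<times> (m2 \<Rightarrow> m2)) set" where "NN = VV \<times> {id}"

lemma inv_Hg: "x = (P, f) \<Longrightarrow> P \<in> VV \<Longrightarrow> f \<in> Gs \<Longrightarrow> g \<in> Gs \<Longrightarrow> g \<circ> f = id \<Longrightarrow>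
   inv\<^bsub>Hg\<^esub> x = (- g P, g)"
proof -
  assume a: "x = (P, f)" "P \<in> VV" "f \<in> Gs" "g \<in> Gs" "g \<circ> f = id"
  interpret group Hg by (rule group_Hg)
  have "g P \<in> VV" using Gs_VV a by blast
  hence "(- g P, g) \<in> carrier Hg" using a VV_neg by simp
  moreover have "(- g P, g) \<otimes>\<^bsub>Hg\<^esub> x = \<one>\<^bsub>Hg\<^esub>" using a by simp
  moreover have "x \<in> carrier Hg" using a by simp
  ultimately show ?thesis by (intro inv_equality) auto
qed

lemma NN_normal: "NN \<lhd> Hg"
proof -
  interpret group Hg by (rule group_Hg)
  have sg: "subgroup NN Hg"
  proof (rule subgroupI)
    show "NN \<subseteq> carrier Hg" unfolding NN_def using Gs_id by auto
    show "NN \<noteq> {}" unfolding NN_def using VV_0 by auto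
  next
    fix a assume "a \<in> NN"
    then obtain P where a: "a = (P, id)" "P \<in> VV" unfolding NN_def by auto
    have "inv\<^bsub>Hg\<^esub> a = (- id P, id)" by (rule inv_Hg[OF a(1) a(2) Gs_id Gs_id]) simp
    thus "inv\<^bsub>Hg\<^esub> a \<in> NN" unfolding NN_def using a VV_neg by simp
  next
    fix a b assume "a \<in> NN" "b \<in> NN"
    thus "a \<otimes>\<^bsub>Hg\<^esub> b \<in> NN" unfolding NN_def using VV_add by auto
  qed
  show ?thesis
    unfolding normal_inv_iff
  proof (intro conjI sg ballI)
    fix x n assume x: "x \<in> carrier Hg" and n: "n \<in> NN"
    obtain Q f where xs: "x = (Q, f)" "Q \<in> VV" "f \<in> Gs" using x by (cases x) auto
    obtain g where g: "g \<in> Gs" "g \<circ> f = id" "f \<circ> g = id" using Gs_inv xs by blast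
    obtain P where ns: "n = (P, id)" "P \<in> VV" using n unfolding NN_def by auto
    have ix: "inv\<^bsub>Hg\<^esub> x = (- g Q, g)" by (rule inv_Hg[OF xs g(1) g(2)])
    have fgQ: "f (g Q) = Q" using g(3) by (metis comp_apply id_apply)
    have "x \<otimes>\<^bsub>Hg\<^esub> n \<otimes>\<^bsub>Hg\<^esub> inv\<^bsub>Hg\<^esub> x = (Q + f P + f (- g Q), f \<circ> g)"
      using xs ns ix by simp
    also have "\<dots> = (f P, id)" using Gs_neg[OF xs(3)] fgQ g(3) by simp
    finally show "x \<otimes>\<^bsub>Hg\<^esub> n \<otimes>\<^bsub>Hg\<^esub> inv\<^bsub>Hg\<^esub> x \<in> NN"
      unfolding NN_def using Gs_VV[OF xs(3) ns(2)] by simp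
  qed
qed

lemma NN_card: "card NN = 3 ^ (4 * al)" unfolding NN_def using card_VV by (simp add: card_cartesian_product)

lemma NN_nt: "NN \<noteq> {\<one>\<^bsub>Hg\<^esub>}"
proof
  assume a: "NN = {\<one>\<^bsub>Hg\<^esub>}"
  have "(M 1 0 0 0, id) \<in> NN" unfolding NN_def VV_def inF_def by simp
  hence "M 1 0 0 0 = 0" using a by simp
  thus False by (simp add: m2_eq_iff)
qed

lemma targets_pairwise:
  "\<forall>d \<in> {6, 9, q - 1, (q + 1) div 2}. \<forall>d' \<in> {6, 9, q - 1, (q + 1) div 2}. d dvd d' \<longrightarrow> d = d'"
proof -
  obtain h where h: "h = (q + 1) div 2" by blast
  have qh: "q + 1 = 2 * h" unfolding h using q_odd by simp
  have q27: "q \<ge> 27" by (rule q_ge)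
  have h14: "h \<ge> 14" using qh q27 by simp
  have q3: "3 dvd q" using al0 by (simp add: dvd_power)
  have n3a: "\<not> 3 dvd q - 1"
  proof
    assume "3 dvd q - 1" hence "3 dvd q - (q - 1)" using q3 by (rule dvd_diff_nat[rotated])
    thus False using q27 by simp
  qed
  have n3b: "\<not> 3 dvd h"
  proof
    assume "3 dvd h" hence "3 dvd q + 1" using qh by simp
    hence "3 dvd (q + 1) - q" using q3 by (rule dvd_diff_nat)
    thus False by simp
  qed
  have n6a: "\<not> 6 dvd q - 1" using n3a dvd_trans[of 3 6] by auto
  have n9a: "\<not> 9 dvd q - 1" using n3a dvd_trans[of 3 9] by auto
  have n6b: "\<not> 6 dvd h" using n3b dvd_trans[of 3 6] by auto
  have n9b: "\<not> 9 dvd h" using n3b dvd_trans[of 3 9] by auto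
  have s1: "\<not> (q - 1) dvd 6" "\<not> (q - 1) dvd 9" using q27 by (auto dest: dvd_imp_le)
  have s2: "\<not> h dvd 6" "\<not> h dvd 9" using h14 by (auto dest: dvd_imp_le)
  have s3: "\<not> (q - 1) dvd h" using qh q27 by (auto dest: dvd_imp_le)
  have s4: "\<not> h dvd q - 1"
  proof
    assume a: "h dvd q - 1"
    have e: "2 * h = q - 1 + 2" using qh q27 by simp
    have "h dvd 2 * h" by simp
    hence "h dvd q - 1 + 2" unfolding e .
    hence "h dvd 2" using a dvd_add_right_iff by blast
    thus False using h14 by (auto dest: dvd_imp_le)
  qed
  have ne: "q - 1 \<noteq> h" using qh q27 by simp
  show ?thesis unfolding h[symmetric] using n6a n9a n6b n9b s1 s2 s3 s4 ne by auto
qed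

lemma max_orders_Hg: "max_orders Hg = {6, 9, q - 1, (q + 1) div 2}"
proof (rule max_orders_char)
  interpret group Hg by (rule group_Hg)
  show "\<forall>s \<in> elem_orders Hg. \<exists>d \<in> {6, 9, q - 1, (q + 1) div 2}. s dvd d"
  proof
    fix s assume "s \<in> elem_orders Hg"
    then obtain x where x: "x \<in> carrier Hg" "s = ord x" unfolding elem_orders_def by auto
    obtain d where "d \<in> {6, 9, q - 1, (q + 1) div 2}" "x [^]\<^bsub>Hg\<^esub> d = \<one>\<^bsub>Hg\<^esub>"
      using ord_bound[OF x(1)] by blast
    thus "\<exists>d \<in> {6, 9, q - 1, (q + 1) div 2}. s dvd d" using pow_eq_id[OF x(1)] x(2) by blast
  qed
  have mem: "d \<in> elem_orders Hg" if "\<exists>x \<in> carrier Hg. ord x = d" for d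
    using that unfolding elem_orders_def by (auto intro: image_eqI)
  show "{6, 9, q - 1, (q + 1) div 2} \<subseteq> elem_orders Hg"
    using mem[OF elem6] mem[OF elem9] mem[OF elem_qm1] mem[OF elem_h] by blast
  show "\<forall>d \<in> {6, 9, q - 1, (q + 1) div 2}. \<forall>d' \<in> {6, 9, q - 1, (q + 1) div 2}. d dvd d' \<longrightarrow> d = d'"
    by (rule targets_pairwise)
qed

theorem main:
  "\<exists>H :: nat monoid. group H \<and> finite (carrier H) \<and>
           O_p 3 H \<noteq> {\<one>\<^bsub>H\<^esub>} \<and> max_orders H = {6, 9, q - 1, (q + 1) div 2}"
  using transport[OF group_Hg finite_Hg NN_normal NN_card NN_nt] max_orders_Hg by simp

end

theorem lemma3p2:
  fixes \<alpha> q :: nat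
  assumes "odd \<alpha>" and "\<alpha> \<ge> 3" and "q = 3 ^ \<alpha>"
  shows "\<exists>H :: nat monoid. group H \<and> finite (carrier H) \<and>
           O_p 3 H \<noteq> {\<one>\<^bsub>H\<^esub>} \<and>
           max_orders H = {6, 9, q - 1, (q + 1) div 2}"
proof -
  interpret ctx \<alpha> using assms by unfold_locales
  show ?thesis using main assms(3) by simp
qed

end
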